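(* Let $S$ be a random walk on $\mathbb{Z}^2$ with symmetric, sub-Gaussian increments and $\mathsf c$ as in the context. For any $h\ge2$, $t\ge0$, $L\in\mathbb{N}$, $f:\mathbb{Z}^2\to\mathbb{R}$ and $p\in(1,\infty)$, with $\mathscr C:=\mathsf c\,e^{2\mathsf ct^2L}$, $$\max_{I\ne*}\Big\|\widehat{\mathsf q}^{|f|,I}_L\tfrac1{\mathcal W_t}\Big\|_{\ell^p}\le4\,\mathscr C^hL\,\Big\|\frac f{w_t}\Big\|_{\ell^\infty}\Big\|\frac f{w_t}\Big\|_{\ell^p}^{h-1},$$ and more generally, for any $r\in[1,\infty]$, $$\max_{I\ne*}\Big\|\widehat{\mathsf q}^{|f|,I}_L\tfrac1{\mathcal W_t}\Big\|_{\ell^p}\le4\,\mathscr C^h\min\{\tfrac r{r-1},\tfrac p{p-1}\}\,L^{1-\frac1r}\Big\|\frac f{w_t}\Big\|_{\ell^r}\Big\|\frac f{w_t}\Big\|_{\ell^p}^{h-1},$$ with the conventions $\frac10:=\infty$, $\frac\infty{\infty-1}:=1$.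
   Context: Walk assumption: $q_1(x)=q_1(-x)$ and $\exists c>0$ with $\sum_xe^{tx^a}q_1(x)\le e^{ct^2/2}$ for all $t\in\mathbb{R}$, $a=1,2$. $q_n(x):=\mathrm{P}(S_n=x\mid S_0=0)$, $q^f_n(x):=\sum_zq_n(x-z)f(z)$. $\mathsf c\in[1,\infty)$ is a constant such that for all $t\ge0$, $n\in\mathbb{N}$, $a=1,2$: $\sum_xe^{tx^a}q_n(x)\le e^{\mathsf ct^2n/2}$, $\sum_xe^{tx^a}q_n(x)^2/q_{2n}(0)\le e^{\mathsf ct^2n/2}$, $\sum_xe^{t|x|}q_n(x)\le\mathsf ce^{2\mathsf ct^2n}$, $\sup_xe^{t|x|}q_n(x)\le\mathsf ce^{2\mathsf ct^2n}/n$. Weights: $w_t(x):=e^{-t|x|}$, $\mathcal W_t(\mathbf x):=\prod_{i=1}^hw_t(x^i)$ for $\mathbf x=(x^1,..,x^h)\in(\mathbb{Z}^2)^h$. Partitions $I\vdash\{1,..,h\}$, $*$ = all singletons; $\mathbf x\sim I$ means $x^a=x^b$ for $a,b$ in a common block and $x^a\ne x^b$ for $a,b$ in distinct blocks of size $\ge2$. $\mathsf q^{f,I}_n(\mathbf x):=\mathbf 1_{\{\mathbf x\sim I\}}\prod_iq^f_n(x^i)$, $\widehat{\mathsf q}^{f,I}_L:=\sum_{n=1}^L\mathsf q^{f,I}_n$; $\ell^p$ norms on $\mathbb{Z}^2$ resp. $(\mathbb{Z}^2)^h$. *)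

theory Defs
  imports "HOL-Probability.Probability" "HOL-Library.Disjoint_Sets"
begin

text \<open>Points of Z^2 are pairs of integers. The law of S_n started at 0, given the
  increment law q1, is the n-fold convolution of q1.\<close>

primrec walk :: "(int \<times> int) pmf \<Rightarrow> nat \<Rightarrow> (int \<times> int) pmf" where
  "walk q1 0 = return_pmf (0, 0)"
| "walk q1 (Suc n) = bind_pmf (walk q1 n) (\<lambda>s. map_pmf (\<lambda>z. s + z) q1)"

definition zn :: "int \<times> int \<Rightarrow> real" where
  "zn x = sqrt (real_of_int (fst x) ^ 2 + real_of_int (snd x) ^ 2)"

definition wt :: "real \<Rightarrow> int \<times> int \<Rightarrow> real" where
  "wt t x = exp (- t * zn x)"

definition Wt :: "real \<Rightarrow> (int \<times> int) list \<Rightarrow> real" where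
  "Wt t xs = (\<Prod>i<length xs. wt t (xs ! i))"

definition qabs :: "(int \<times> int) pmf \<Rightarrow> nat \<Rightarrow> (int \<times> int \<Rightarrow> real) \<Rightarrow> int \<times> int \<Rightarrow> ennreal" where
  "qabs q1 n f x = (\<integral>\<^sup>+ z. ennreal (pmf (walk q1 n) (x - z) * \<bar>f z\<bar>) \<partial>count_space UNIV)"

text \<open>Partitions of {1..h} are represented as partitions of {0..<h}; tuples as lists of length h.\<close>
definition star :: "nat \<Rightarrow> nat set set" where
  "star h = {{i} | i. i < h}"

definition sim :: "(int \<times> int) list \<Rightarrow> nat set set \<Rightarrow> bool" where
  "sim xs I \<longleftrightarrow>
     (\<forall>B\<in>I. \<forall>a\<in>B. \<forall>b\<in>B. xs ! a = xs ! b) \<and>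
     (\<forall>B1\<in>I. \<forall>B2\<in>I. B1 \<noteq> B2 \<and> card B1 \<ge> 2 \<and> card B2 \<ge> 2 \<longrightarrow>
         (\<forall>a\<in>B1. \<forall>b\<in>B2. xs ! a \<noteq> xs ! b))"

definition qhat :: "(int \<times> int) pmf \<Rightarrow> (int \<times> int \<Rightarrow> real) \<Rightarrow> nat set set \<Rightarrow> nat \<Rightarrow>
    (int \<times> int) list \<Rightarrow> ennreal" where
  "qhat q1 f I L xs = (\<Sum>n\<in>{1..L}. (if sim xs I then (\<Prod>i<length xs. qabs q1 n f (xs ! i)) else 0))"

definition enn_powr :: "ennreal \<Rightarrow> real \<Rightarrow> ennreal" where
  "enn_powr a q = (if a = \<top> then \<top> else ennreal (enn2real a powr q))"

definition lpnorm :: "ennreal \<Rightarrow> 'a set \<Rightarrow> ('a \<Rightarrow> ennreal) \<Rightarrow> ennreal" where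
  "lpnorm r A G = (if r = \<top> then (SUP x\<in>A. G x)
     else enn_powr (\<integral>\<^sup>+ x. enn_powr (G x) (enn2real r) \<partial>count_space A) (1 / enn2real r))"

text \<open>Hoelder conjugate r/(r-1) with conventions 1/0 = infinity and infinity/(infinity-1) = 1.\<close>
definition conj_exp :: "ennreal \<Rightarrow> ennreal" where
  "conj_exp r = (if r = 1 then \<top> else if r = \<top> then 1
                 else ennreal (enn2real r / (enn2real r - 1)))"

text \<open>L^{1-1/r}, with 1/infinity = 0.\<close>
definition Lpow :: "ennreal \<Rightarrow> nat \<Rightarrow> ennreal" where
  "Lpow r L = (if r = \<top> then ennreal (real L) else ennreal (real L powr (1 - 1 / enn2real r)))"

end

theory Submission
  imports Defs
begin

lemma enn_powr_ennreal: "0 \<le> a \<Longrightarrow> enn_powr (ennreal a) q = ennreal (a powr q)"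
  by (simp add: enn_powr_def)
lemma enn_powr_top[simp]: "enn_powr \<top> q = \<top>"
  by (simp add: enn_powr_def)
lemma enn_powr_0[simp]: "enn_powr 0 q = 0"
  by (simp add: enn_powr_def)
lemma enn_powr_1[simp]: "enn_powr a 1 = a"
  by (cases a) (auto simp: enn_powr_def)
lemma enn_powr_eq_top_iff[simp]: "enn_powr a q = \<top> \<longleftrightarrow> a = \<top>"
  by (cases a) (auto simp: enn_powr_def)
lemma enn_powr_eq_0_iff[simp]: "enn_powr a q = 0 \<longleftrightarrow> a = 0"
  by (cases a) (auto simp: enn_powr_def ennreal_eq_0_iff)


lemma enn_powr_mult:
  assumes "q > 0" shows "enn_powr (a * b) q = enn_powr a q * enn_powr b q"
proof (cases "a = \<top> \<or> b = \<top>")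
  case True
  then show ?thesis
  proof
    assume a: "a = \<top>"
    show ?thesis
    proof (cases "b = 0")
      case False then show ?thesis using a by (simp add: ennreal_top_mult)
    qed (simp add: a)
  next
    assume b: "b = \<top>"
    show ?thesis
    proof (cases "a = 0")
      case False then show ?thesis using b by (simp add: ennreal_mult_top)
    qed (simp add: b)
  qed
next
  case False
  then obtain x y where xy: "a = ennreal x" "b = ennreal y" "0 \<le> x" "0 \<le> y"
    by (metis ennreal_cases)
  then have ab: "a * b = ennreal (x * y)" by (simp add: ennreal_mult)
  have "enn_powr (a * b) q = ennreal ((x * y) powr q)"
    unfolding ab by (rule enn_powr_ennreal) (simp add: xy)
  then show ?thesis using xy
    by (simp add: enn_powr_ennreal powr_mult ennreal_mult)
qed

lemma enn_powr_add_exp: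
  assumes "q1 > 0" "q2 > 0"
  shows "enn_powr a (q1 + q2) = enn_powr a q1 * enn_powr a q2"
proof (cases "a = \<top>")
  case False
  then obtain x where x: "a = ennreal x" "0 \<le> x" by (metis ennreal_cases)
  show ?thesis
  proof (cases "x = 0")
    case False then show ?thesis using x
      by (simp add: enn_powr_ennreal powr_add ennreal_mult)
  qed (simp add: x)
qed simp

lemma enn_powr_powr:
  "enn_powr (enn_powr a q1) q2 = enn_powr a (q1 * q2)"
proof (cases "a = \<top>")
  case False
  then obtain x where x: "a = ennreal x" "0 \<le> x" by (metis ennreal_cases)
  then show ?thesis by (simp add: enn_powr_ennreal powr_powr)
qed simp

lemma enn_powr_mono:
  assumes "a \<le> b" "q \<ge> 0" shows "enn_powr a q \<le> enn_powr b q"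
proof (cases "b = \<top>")
  case False
  then obtain y where y: "b = ennreal y" "0 \<le> y" by (metis ennreal_cases)
  have "a \<noteq> \<top>" using False assms(1) top_unique by auto
  then obtain x where x: "a = ennreal x" "0 \<le> x" by (metis ennreal_cases)
  have "x \<le> y" using x y assms by simp
  show ?thesis
  proof (cases "x = 0")
    case False
    then show ?thesis using x y \<open>x \<le> y\<close> assms
      by (simp add: enn_powr_ennreal powr_mono2)
  qed (simp add: x)
qed simp

lemma enn_powr_strict_mono:
  assumes "a < b" "q > 0" shows "enn_powr a q < enn_powr b q"
proof (cases "b = \<top>")
  case False
  then obtain y where y: "b = ennreal y" "0 \<le> y" by (metis ennreal_cases)
  have "a \<noteq> \<top>" using assms(1) by auto
  then obtain x where x: "a = ennreal x" "0 \<le> x" by (metis ennreal_cases)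
  have "x < y" using x y assms by (simp add: ennreal_less_iff)
  show ?thesis using x y \<open>x < y\<close> assms
    by (simp add: enn_powr_ennreal powr_less_mono2 ennreal_less_iff)
next
  case True
  have "a \<noteq> \<top>" using assms(1) by auto
  then have "enn_powr a q \<noteq> \<top>" by simp
  then show ?thesis using True by (simp add: less_top[symmetric])
qed

lemma enn_powr_le_cancel:
  assumes "enn_powr a q \<le> enn_powr b q" "q > 0" shows "a \<le> b"
  using enn_powr_strict_mono[of b a q] assms by (meson not_le)

lemma enn_powr_one_base: "enn_powr 1 q = 1"
  by (simp add: enn_powr_def)

lemma enn_powr_prod:
  assumes "q > 0" shows "enn_powr (\<Prod>i\<in>A. f i) q = (\<Prod>i\<in>A. enn_powr (f i) q)"
proof (cases "finite A")
  case True then show ?thesis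
    by (induction A rule: finite_induct) (simp_all add: enn_powr_mult assms enn_powr_one_base)
qed (simp add: enn_powr_one_base)

lemma enn_powr_nat:
  assumes n: "n \<ge> 1" shows "enn_powr a (real n) = a ^ n"
proof (cases "a = \<top>")
  case False
  then obtain x where x: "a = ennreal x" "0 \<le> x" by (metis ennreal_cases)
  have "x powr real n = x ^ n" using n x(2) by (intro powr_realpow') auto
  then show ?thesis using x by (simp add: enn_powr_ennreal ennreal_power)
next
  case True
  have "(\<top>::ennreal) ^ n = \<top>" using n by simp
  then show ?thesis using True by simp
qed

lemma enn_powr_inv_cancel:
  assumes "q > 0" shows "enn_powr (enn_powr a q) (1/q) = a"
  using assms by (simp add: enn_powr_powr)

lemma enn_powr_inv_cancel2:
  assumes "q > 0" shows "enn_powr (enn_powr a (1/q)) q = a"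
  using assms by (simp add: enn_powr_powr)

lemma enn_powr_le_iff: "q > 0 \<Longrightarrow> enn_powr a q \<le> enn_powr b q \<longleftrightarrow> a \<le> b"
  using enn_powr_le_cancel[of a q b] enn_powr_mono[of a b q] by (auto simp: less_imp_le)

lemma enn_powr_zero_exp: "a \<noteq> 0 \<Longrightarrow> a \<noteq> \<top> \<Longrightarrow> enn_powr a 0 = 1"
  unfolding enn_powr_def by (simp add: enn2real_eq_0_iff)


lemma cs_int_0_iff: "(\<integral>\<^sup>+x. u x \<partial>count_space A) = 0 \<longleftrightarrow> (\<forall>x\<in>A. u x = 0)"
  by (simp add: nn_integral_0_iff_AE AE_count_space)

lemma young_pt:
  fixes x \<mu> p :: real
  assumes "p > 1" "x \<ge> 0" "\<mu> \<ge> 0"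
  shows "p * \<mu> powr (p - 1) * x \<le> x powr p + (p - 1) * \<mu> powr p"
proof -
  define q where "q = p / (p - 1)"
  have q1: "q > 1" using assms by (simp add: q_def field_simps)
  have pq: "1/p + 1/q = 1" using assms by (simp add: q_def field_simps)
  have "x * \<mu> powr (p - 1) \<le> x powr p / p + (\<mu> powr (p - 1)) powr q / q"
    using Youngs_inequality[OF assms(1) q1 pq assms(2)] assms by simp
  also have "(\<mu> powr (p - 1)) powr q = \<mu> powr p"
    using assms by (simp add: powr_powr q_def)
  finally have "x * \<mu> powr (p - 1) \<le> x powr p / p + \<mu> powr p / q" .
  then have "p * (x * \<mu> powr (p - 1)) \<le> p * (x powr p / p + \<mu> powr p / q)"
    using assms by (intro mult_left_mono) auto
  also have "\<dots> = x powr p + (p - 1) * \<mu> powr p"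
    using assms by (simp add: q_def field_simps)
  finally show ?thesis by (simp add: mult_ac)
qed

lemma young_enn:
  fixes \<mu> p :: real and v :: ennreal
  assumes "p > 1" "\<mu> \<ge> 0"
  shows "ennreal (p * \<mu> powr (p - 1)) * v \<le> enn_powr v p + ennreal ((p - 1) * \<mu> powr p)"
proof (cases "v = \<top>")
  case False
  then obtain x where x: "v = ennreal x" "0 \<le> x" by (metis ennreal_cases)
  have "ennreal (p * \<mu> powr (p - 1)) * v = ennreal (p * \<mu> powr (p - 1) * x)"
    using x assms by (simp add: ennreal_mult)
  also have "\<dots> \<le> ennreal (x powr p + (p - 1) * \<mu> powr p)"
    using young_pt[OF assms(1) x(2) assms(2)] by (rule ennreal_leI)
  also have "\<dots> = enn_powr v p + ennreal ((p - 1) * \<mu> powr p)"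
    using x assms by (simp add: enn_powr_ennreal ennreal_plus)
  finally show ?thesis .
qed simp

lemma le_one_plus_powr:
  assumes "p \<ge> 1" shows "v \<le> 1 + enn_powr v p"
proof (cases "v = \<top>")
  case False
  then obtain x where x: "v = ennreal x" "0 \<le> x" by (metis ennreal_cases)
  have "x \<le> 1 + x powr p"
  proof (cases "x \<le> 1")
    case False
    then have "x powr 1 \<le> x powr p" using assms by (intro powr_mono) auto
    then show ?thesis using False by simp
  qed (use powr_ge_zero[of x p] in linarith)
  then have "ennreal x \<le> ennreal (1 + x powr p)" by (rule ennreal_leI)
  then show ?thesis using x by (simp add: enn_powr_ennreal ennreal_plus)
qed simp

lemma jensen_nn:
  fixes w v :: "'a \<Rightarrow> ennreal" and p :: real
  assumes p: "p \<ge> 1"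
  shows "enn_powr (\<integral>\<^sup>+x. w x * v x \<partial>count_space A) p
     \<le> enn_powr (\<integral>\<^sup>+x. w x \<partial>count_space A) (p - 1) * (\<integral>\<^sup>+x. w x * enn_powr (v x) p \<partial>count_space A)"
    (is "enn_powr ?M p \<le> enn_powr ?S (p - 1) * ?T")
proof -
  have S0: "?M = 0" if "?S = 0"
  proof -
    have "\<forall>x\<in>A. w x = 0" using that by (simp add: cs_int_0_iff)
    then show ?thesis by (simp add: cs_int_0_iff)
  qed
  have T0: "?M = 0" if "?T = 0"
  proof -
    have "\<forall>x\<in>A. w x * enn_powr (v x) p = 0" using that by (simp add: cs_int_0_iff)
    then have "\<forall>x\<in>A. w x * v x = 0" by simp
    then show ?thesis by (simp add: cs_int_0_iff)
  qed
  show ?thesis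
  proof (cases "p = 1")
    case True
    show ?thesis
    proof (cases "?S = 0")
      case True then show ?thesis using S0 by simp
    next
      case S: False
      show ?thesis
      proof (cases "?S = \<top>")
        case True
        show ?thesis
        proof (cases "?M = 0")
          case False
          then have "?T \<noteq> 0" using T0 by auto
          then show ?thesis using True \<open>p = 1\<close> by (simp add: ennreal_top_mult)
        qed simp
      next
        case False
        then show ?thesis using S \<open>p = 1\<close> by (simp add: enn_powr_zero_exp)
      qed
    qed
  next
    case False
    then have p1: "p > 1" using p by simp
    show ?thesis
    proof (cases "?S = 0 \<or> ?T = 0")
      case True then show ?thesis using S0 T0 by auto
    next
      case nz: False
      show ?thesis
      proof (cases "?S = \<top> \<or> ?T = \<top>")
        case True
        have "enn_powr ?S (p - 1) \<noteq> 0" using nz by simp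
        then have "enn_powr ?S (p - 1) * ?T = \<top>" using True nz
          by (auto simp: ennreal_top_mult ennreal_mult_top)
        then show ?thesis by simp
      next
        case fin: False
        have "?M \<le> (\<integral>\<^sup>+x. w x * (1 + enn_powr (v x) p) \<partial>count_space A)"
          by (intro nn_integral_mono mult_left_mono le_one_plus_powr p) auto
        also have "\<dots> = ?S + ?T"
          by (simp add: distrib_left nn_integral_add)
        also have "?S + ?T < \<top>" using fin by (simp add: less_top[symmetric])
        finally have "?M < \<top>" .
        obtain s where s: "?S = ennreal s" "s > 0"
          using nz fin by (metis ennreal_cases ennreal_eq_0_iff not_less)
        obtain tt where tt: "?T = ennreal tt" "tt \<ge> 0"
          using nz fin by (metis ennreal_cases)
        obtain m where m: "?M = ennreal m" "m \<ge> 0"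
          using \<open>?M < \<top>\<close> by (metis ennreal_cases less_irrefl)
        define \<mu> where "\<mu> = m / s"
        have mu: "\<mu> \<ge> 0" using m s by (simp add: \<mu>_def)
        have "ennreal (p * \<mu> powr (p - 1)) * ?M
            = (\<integral>\<^sup>+x. w x * (ennreal (p * \<mu> powr (p - 1)) * v x) \<partial>count_space A)"
          by (simp add: nn_integral_cmult[symmetric] mult_ac)
        also have "\<dots> \<le> (\<integral>\<^sup>+x. w x * (enn_powr (v x) p + ennreal ((p - 1) * \<mu> powr p)) \<partial>count_space A)"
          by (intro nn_integral_mono mult_left_mono young_enn p1 mu) auto
        also have "\<dots> = ?T + (\<integral>\<^sup>+x. w x * ennreal ((p - 1) * \<mu> powr p) \<partial>count_space A)"
          by (simp add: distrib_left nn_integral_add)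
        also have "\<dots> = ?T + ennreal ((p - 1) * \<mu> powr p) * ?S"
          by (simp add: nn_integral_multc mult.commute)
        finally have X: "ennreal (p * \<mu> powr (p - 1)) * ?M \<le> ?T + ennreal ((p - 1) * \<mu> powr p) * ?S" .
        have e1: "ennreal (p * \<mu> powr (p - 1)) * ?M = ennreal (p * \<mu> powr (p - 1) * m)"
          unfolding m(1) by (rule ennreal_mult[symmetric]) (use p1 mu m in auto)
        have e2: "ennreal ((p - 1) * \<mu> powr p) * ennreal s = ennreal ((p - 1) * \<mu> powr p * s)"
          by (rule ennreal_mult[symmetric]) (use p1 mu s in auto)
        have e3: "ennreal tt + ennreal ((p - 1) * \<mu> powr p * s) = ennreal (tt + (p - 1) * \<mu> powr p * s)"
          by (rule ennreal_plus[symmetric]) (use p1 mu s tt in auto)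
        have "ennreal (p * \<mu> powr (p - 1) * m) \<le> ennreal (tt + (p - 1) * \<mu> powr p * s)"
          using X unfolding e1 s(1) tt(1) e2 e3 .
        then have ineq: "p * \<mu> powr (p - 1) * m \<le> tt + (p - 1) * \<mu> powr p * s"
          using tt s mu p1 by (subst (asm) ennreal_le_iff) (auto intro!: add_nonneg_nonneg)
        have "m powr p \<le> s powr (p - 1) * tt"
        proof (cases "m = 0")
          case False
          then have mupos: "\<mu> > 0" using m s by (simp add: \<mu>_def)
          have mm: "m = \<mu> * s" using s by (simp add: \<mu>_def)
          have "\<mu> powr (p - 1) * m = \<mu> powr p * s"
            using mupos by (simp add: mm powr_diff field_simps)
          then have "p * \<mu> powr (p - 1) * m = p * (\<mu> powr p * s)" by simp
          then have "p * (\<mu> powr p * s) \<le> tt + (p - 1) * \<mu> powr p * s"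
            using ineq by linarith
          then have "\<mu> powr p * s \<le> tt" by (simp add: algebra_simps)
          then have "s powr (p - 1) * (\<mu> powr p * s) \<le> s powr (p - 1) * tt"
            by (intro mult_left_mono) auto
          moreover have "m powr p = s powr (p - 1) * (\<mu> powr p * s)"
            using mupos s by (simp add: mm powr_mult powr_diff field_simps)
          ultimately show ?thesis by simp
        qed (use tt s in simp)
        then show ?thesis using s tt m p1
          by (simp add: enn_powr_ennreal ennreal_mult[symmetric] ennreal_leI)
      qed
    qed
  qed
qed


lemma list_len_Suc_bij:
  "bij_betw (\<lambda>(x, ys). x # ys) (UNIV \<times> {ys. length ys = h}) {xs. length xs = Suc h}"
  unfolding bij_betw_def
proof
  show "inj_on (\<lambda>(x, ys). x # ys) (UNIV \<times> {ys. length ys = h})"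
    by (auto simp: inj_on_def)
  show "(\<lambda>(x, ys). x # ys) ` (UNIV \<times> {ys. length ys = h}) = {xs. length xs = Suc h}"
  proof (intro equalityI subsetI)
    fix xs assume "xs \<in> {xs. length xs = Suc h}"
    then obtain y ys where "xs = y # ys" "length ys = h" by (cases xs) auto
    then show "xs \<in> (\<lambda>(x, ys). x # ys) ` (UNIV \<times> {ys. length ys = h})" by force
  qed auto
qed

lemma list_sum_split:
  fixes F :: "'a list \<Rightarrow> ennreal"
  shows "(\<integral>\<^sup>+xs. F xs \<partial>count_space {xs. length xs = Suc h})
       = (\<integral>\<^sup>+x. \<integral>\<^sup>+ys. F (x # ys) \<partial>count_space {ys. length ys = h} \<partial>count_space UNIV)"
proof -
  have "(\<integral>\<^sup>+xs. F xs \<partial>count_space {xs. length xs = Suc h})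
      = (\<integral>\<^sup>+z. F ((\<lambda>(x, ys). x # ys) z) \<partial>count_space (UNIV \<times> {ys. length ys = h}))"
    by (rule nn_integral_bij_count_space[symmetric, OF list_len_Suc_bij])
  also have "\<dots> = (\<integral>\<^sup>+z. F (fst z # snd z) * indicator (UNIV \<times> {ys. length ys = h}) z \<partial>count_space UNIV)"
    by (subst nn_integral_count_space_indicator) (auto simp: case_prod_beta)
  also have "\<dots> = (\<integral>\<^sup>+x. \<integral>\<^sup>+ys. F (x # ys) * indicator (UNIV \<times> {ys. length ys = h}) (x, ys) \<partial>count_space UNIV \<partial>count_space UNIV)"
    by (subst nn_integral_fst_count_space[symmetric]) simp
  also have "\<dots> = (\<integral>\<^sup>+x. \<integral>\<^sup>+ys. F (x # ys) \<partial>count_space {ys. length ys = h} \<partial>count_space UNIV)"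
    by (intro nn_integral_cong) (simp add: nn_integral_count_space_indicator indicator_def)
  finally show ?thesis .
qed

lemma list_prod_integral:
  fixes \<phi> :: "nat \<Rightarrow> 'a \<Rightarrow> ennreal"
  shows "(\<integral>\<^sup>+xs. (\<Prod>i<h. \<phi> i (xs ! i)) \<partial>count_space {xs. length xs = h})
       = (\<Prod>i<h. \<integral>\<^sup>+x. \<phi> i x \<partial>count_space UNIV)"
proof (induction h arbitrary: \<phi>)
  case 0
  have "{xs::'a list. length xs = 0} = {[]}" by auto
  then show ?case by (simp add: nn_integral_count_space_finite)
next
  case (Suc h)
  have "(\<integral>\<^sup>+xs. (\<Prod>i<Suc h. \<phi> i (xs ! i)) \<partial>count_space {xs. length xs = Suc h})
      = (\<integral>\<^sup>+x. \<integral>\<^sup>+ys. \<phi> 0 x * (\<Prod>i<h. \<phi> (Suc i) (ys ! i)) \<partial>count_space {ys. length ys = h} \<partial>count_space UNIV)"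
    unfolding list_sum_split prod.lessThan_Suc_shift by simp
  also have "\<dots> = (\<integral>\<^sup>+x. \<phi> 0 x * (\<Prod>i<h. \<integral>\<^sup>+x. \<phi> (Suc i) x \<partial>count_space UNIV) \<partial>count_space UNIV)"
    by (simp add: nn_integral_cmult Suc.IH[of "\<lambda>i. \<phi> (Suc i)"])
  also have "\<dots> = (\<Prod>i<Suc h. \<integral>\<^sup>+x. \<phi> i x \<partial>count_space UNIV)"
    unfolding prod.lessThan_Suc_shift by (simp add: nn_integral_multc)
  finally show ?case .
qed

lemma prod_two_out:
  fixes g :: "nat \<Rightarrow> 'b::comm_monoid_mult"
  assumes "a < h" "b < h" "a \<noteq> b"
  shows "(\<Prod>i<h. g i) = g a * g b * (\<Prod>i\<in>{..<h} - {a, b}. g i)"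
proof -
  have "(\<Prod>i<h. g i) = g a * (\<Prod>i\<in>{..<h} - {a}. g i)"
    using assms by (intro prod.remove) auto
  also have "(\<Prod>i\<in>{..<h} - {a}. g i) = g b * (\<Prod>i\<in>{..<h} - {a} - {b}. g i)"
    using assms by (intro prod.remove) auto
  also have "{..<h} - {a} - {b} = {..<h} - {a, b}" by auto
  finally show ?thesis by (simp add: mult_ac)
qed

lemma card_two_out: "a < h \<Longrightarrow> b < h \<Longrightarrow> a \<noteq> b \<Longrightarrow> card ({..<h} - {a, b}) = h - 2"
  by (subst card_Diff_subset) auto

lemma list_pair_integral:
  fixes \<Psi> \<phi> :: "'a::countable \<Rightarrow> ennreal"
  assumes ab: "a < h" "b < h" "a \<noteq> b"
  shows "(\<integral>\<^sup>+xs. of_bool (xs ! a = xs ! b) * \<Psi> (xs ! a) * (\<Prod>i\<in>{..<h} - {a, b}. \<phi> (xs ! i))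
            \<partial>count_space {xs. length xs = h})
       = (\<integral>\<^sup>+x. \<Psi> x \<partial>count_space UNIV) * (\<integral>\<^sup>+x. \<phi> x \<partial>count_space UNIV) ^ (h - 2)"
proof -
  define chi where "chi w i = (if i = a \<or> i = b then indicator {w} else \<phi>)" for w i
  have pt: "of_bool (xs ! a = xs ! b) * \<Psi> (xs ! a) * (\<Prod>i\<in>{..<h} - {a, b}. \<phi> (xs ! i))
      = (\<integral>\<^sup>+w. \<Psi> w * (\<Prod>i<h. chi w i (xs ! i)) \<partial>count_space UNIV)" for xs :: "'a list"
  proof -
    have "(\<Prod>i<h. chi w i (xs ! i)) = indicator {w} (xs ! a) * indicator {w} (xs ! b) * (\<Prod>i\<in>{..<h} - {a, b}. \<phi> (xs ! i))" for w
      using prod_two_out[OF ab, of "\<lambda>i. chi w i (xs ! i)"] ab by (simp add: chi_def)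
    then have "(\<integral>\<^sup>+w. \<Psi> w * (\<Prod>i<h. chi w i (xs ! i)) \<partial>count_space UNIV)
       = (\<integral>\<^sup>+w. (\<Psi> w * indicator {xs ! a} w * indicator {xs ! b} w) * (\<Prod>i\<in>{..<h} - {a, b}. \<phi> (xs ! i)) \<partial>count_space UNIV)"
      by (intro nn_integral_cong) (simp add: indicator_def mult_ac)
    also have "\<dots> = (\<integral>\<^sup>+w. \<Psi> w * indicator {xs ! a} w * indicator {xs ! b} w \<partial>count_space UNIV) * (\<Prod>i\<in>{..<h} - {a, b}. \<phi> (xs ! i))"
      by (simp add: nn_integral_multc)
    also have "(\<integral>\<^sup>+w. \<Psi> w * indicator {xs ! a} w * indicator {xs ! b} w \<partial>count_space UNIV) = of_bool (xs ! a = xs ! b) * \<Psi> (xs ! a)"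
    proof (cases "xs ! a = xs ! b")
      case True
      have "\<And>w. \<Psi> w * indicator {xs ! a} w * indicator {xs ! b} w = \<Psi> (xs ! a) * indicator {xs ! a} w"
        using True by (auto simp: indicator_def)
      then show ?thesis using True
        by (simp add: nn_integral_cmult_indicator)
    next
      case False
      then have "\<And>w. \<Psi> w * indicator {xs ! a} w * indicator {xs ! b} w = (0::ennreal)"
        by (auto simp: indicator_def)
      then show ?thesis using False by simp
    qed
    finally show ?thesis by simp
  qed
  have "(\<integral>\<^sup>+xs. of_bool (xs ! a = xs ! b) * \<Psi> (xs ! a) * (\<Prod>i\<in>{..<h} - {a, b}. \<phi> (xs ! i))
            \<partial>count_space {xs. length xs = h})
      = (\<integral>\<^sup>+xs. \<integral>\<^sup>+w. \<Psi> w * (\<Prod>i<h. chi w i (xs ! i)) \<partial>count_space UNIV \<partial>count_space {xs. length xs = h})"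
    by (simp add: pt)
  also have "\<dots> = (\<integral>\<^sup>+w. \<integral>\<^sup>+xs. \<Psi> w * (\<Prod>i<h. chi w i (xs ! i)) \<partial>count_space {xs. length xs = h} \<partial>count_space UNIV)"
    by (rule nn_integral_count_space_nn_integral) auto
  also have "\<dots> = (\<integral>\<^sup>+w. \<Psi> w * (\<Prod>i<h. \<integral>\<^sup>+x. chi w i x \<partial>count_space UNIV) \<partial>count_space UNIV)"
    by (simp add: nn_integral_cmult list_prod_integral)
  also have "\<dots> = (\<integral>\<^sup>+w. \<Psi> w * (\<integral>\<^sup>+x. \<phi> x \<partial>count_space UNIV) ^ (h - 2) \<partial>count_space UNIV)"
  proof (intro nn_integral_cong)
    fix w
    have "(\<Prod>i<h. \<integral>\<^sup>+x. chi w i x \<partial>count_space UNIV)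
        = (\<integral>\<^sup>+x. chi w a x \<partial>count_space UNIV) * (\<integral>\<^sup>+x. chi w b x \<partial>count_space UNIV)
          * (\<Prod>i\<in>{..<h} - {a, b}. \<integral>\<^sup>+x. chi w i x \<partial>count_space UNIV)"
      by (rule prod_two_out[OF ab])
    also have "\<dots> = (\<Prod>i\<in>{..<h} - {a, b}. \<integral>\<^sup>+x. \<phi> x \<partial>count_space UNIV)"
      by (simp add: chi_def)
    also have "\<dots> = (\<integral>\<^sup>+x. \<phi> x \<partial>count_space UNIV) ^ (h - 2)"
      using card_two_out[OF ab] by simp
    finally show "\<Psi> w * (\<Prod>i<h. \<integral>\<^sup>+x. chi w i x \<partial>count_space UNIV) = \<Psi> w * (\<integral>\<^sup>+x. \<phi> x \<partial>count_space UNIV) ^ (h - 2)"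
      by simp
  qed
  also have "\<dots> = (\<integral>\<^sup>+x. \<Psi> x \<partial>count_space UNIV) * (\<integral>\<^sup>+x. \<phi> x \<partial>count_space UNIV) ^ (h - 2)"
    by (simp add: nn_integral_multc)
  finally show ?thesis .
qed


lemma jensen_fin:
  fixes w v :: "'i \<Rightarrow> ennreal"
  assumes "finite N" "p \<ge> 1"
  shows "enn_powr (\<Sum>n\<in>N. w n * v n) p \<le> enn_powr (\<Sum>n\<in>N. w n) (p - 1) * (\<Sum>n\<in>N. w n * enn_powr (v n) p)"
  using jensen_nn[OF assms(2), where w=w and v=v and A=N] assms(1) by (simp add: nn_integral_count_space_finite)

lemma mink_fin:
  fixes H :: "nat \<Rightarrow> 'a \<Rightarrow> ennreal" and c :: "nat \<Rightarrow> real"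
  assumes N: "finite N" and p: "p > 1" and c: "\<And>n. n \<in> N \<Longrightarrow> c n > 0"
    and H: "\<And>n. n \<in> N \<Longrightarrow> (\<integral>\<^sup>+x. enn_powr (H n x) p \<partial>count_space UNIV) \<le> ennreal (c n powr p)"
  shows "(\<integral>\<^sup>+x. enn_powr (\<Sum>n\<in>N. H n x) p \<partial>count_space UNIV) \<le> ennreal ((\<Sum>n\<in>N. c n) powr p)"
proof -
  have sc: "(\<Sum>n\<in>N. c n) \<ge> 0" using c by (intro sum_nonneg) (auto intro: less_imp_le)
  have eqH: "H n x = ennreal (c n) * (ennreal (1 / c n) * H n x)" if "n \<in> N" for n x
  proof -
    have "ennreal (c n) * ennreal (1 / c n) = ennreal (c n * (1 / c n))"
      by (rule ennreal_mult[symmetric]) (use c[OF that] in auto)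
    also have "\<dots> = 1" using c[OF that] by simp
    finally show ?thesis by (simp add: mult.assoc[symmetric])
  qed
  have pw: "enn_powr (\<Sum>n\<in>N. H n x) p \<le> enn_powr (ennreal (\<Sum>n\<in>N. c n)) (p - 1)
        * (\<Sum>n\<in>N. ennreal (c n) * (ennreal ((1 / c n) powr p) * enn_powr (H n x) p))" for x
  proof -
    have "(\<Sum>n\<in>N. H n x) = (\<Sum>n\<in>N. ennreal (c n) * (ennreal (1 / c n) * H n x))"
      using eqH by (intro sum.cong) auto
    then have "enn_powr (\<Sum>n\<in>N. H n x) p \<le> enn_powr (\<Sum>n\<in>N. ennreal (c n)) (p - 1)
        * (\<Sum>n\<in>N. ennreal (c n) * enn_powr (ennreal (1 / c n) * H n x) p)"
      using jensen_fin[OF N, of p "\<lambda>n. ennreal (c n)" "\<lambda>n. ennreal (1 / c n) * H n x"] p by simp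
    also have "(\<Sum>n\<in>N. ennreal (c n)) = ennreal (\<Sum>n\<in>N. c n)"
      using c by (subst sum_ennreal) (auto intro: less_imp_le)
    also have "(\<Sum>n\<in>N. ennreal (c n) * enn_powr (ennreal (1 / c n) * H n x) p)
        = (\<Sum>n\<in>N. ennreal (c n) * (ennreal ((1 / c n) powr p) * enn_powr (H n x) p))"
    proof (intro sum.cong refl)
      fix n assume n: "n \<in> N"
      have "0 \<le> 1 / c n" using c[OF n] by simp
      then show "ennreal (c n) * enn_powr (ennreal (1 / c n) * H n x) p
          = ennreal (c n) * (ennreal ((1 / c n) powr p) * enn_powr (H n x) p)"
        using p by (simp add: enn_powr_mult enn_powr_ennreal)
    qed
    finally show ?thesis .
  qed
  have "(\<integral>\<^sup>+x. enn_powr (\<Sum>n\<in>N. H n x) p \<partial>count_space UNIV)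
      \<le> (\<integral>\<^sup>+x. enn_powr (ennreal (\<Sum>n\<in>N. c n)) (p - 1)
        * (\<Sum>n\<in>N. ennreal (c n) * (ennreal ((1 / c n) powr p) * enn_powr (H n x) p)) \<partial>count_space UNIV)"
    by (intro nn_integral_mono pw)
  also have "\<dots> = enn_powr (ennreal (\<Sum>n\<in>N. c n)) (p - 1)
        * (\<Sum>n\<in>N. ennreal (c n) * (ennreal ((1 / c n) powr p) * (\<integral>\<^sup>+x. enn_powr (H n x) p \<partial>count_space UNIV)))"
    by (simp add: nn_integral_cmult nn_integral_sum)
  also have "\<dots> \<le> enn_powr (ennreal (\<Sum>n\<in>N. c n)) (p - 1)
        * (\<Sum>n\<in>N. ennreal (c n) * (ennreal ((1 / c n) powr p) * ennreal (c n powr p)))"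
    by (intro mult_left_mono sum_mono H) auto
  also have "(\<Sum>n\<in>N. ennreal (c n) * (ennreal ((1 / c n) powr p) * ennreal (c n powr p))) = (\<Sum>n\<in>N. ennreal (c n))"
  proof (intro sum.cong refl)
    fix n assume n: "n \<in> N"
    have "(1 / c n) powr p * c n powr p = 1"
      using c[OF n] by (simp add: powr_divide powr_gt_zero[of "c n"] less_imp_neq)
    then have "ennreal ((1 / c n) powr p) * ennreal (c n powr p) = 1"
      by (simp add: ennreal_mult[symmetric])
    then show "ennreal (c n) * (ennreal ((1 / c n) powr p) * ennreal (c n powr p)) = ennreal (c n)" by simp
  qed
  also have "(\<Sum>n\<in>N. ennreal (c n)) = ennreal (\<Sum>n\<in>N. c n)"
    using c by (subst sum_ennreal) (auto intro: less_imp_le)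
  also have "enn_powr (ennreal (\<Sum>n\<in>N. c n)) (p - 1) * ennreal (\<Sum>n\<in>N. c n)
      = enn_powr (ennreal (\<Sum>n\<in>N. c n)) p"
    using enn_powr_add_exp[of "p - 1" 1 "ennreal (\<Sum>n\<in>N. c n)"] p by simp
  also have "\<dots> = ennreal ((\<Sum>n\<in>N. c n) powr p)"
    using sc by (simp add: enn_powr_ennreal)
  finally show ?thesis .
qed

lemma core_bound:
  fixes G :: "nat \<Rightarrow> 'a::countable \<Rightarrow> ennreal" and \<Phi> :: "'a list \<Rightarrow> ennreal"
  assumes N: "finite N" and p: "p > 1" and ab: "a < h" "b < h" "a \<noteq> b"
    and Phi: "\<And>xs. length xs = h \<Longrightarrow> \<Phi> xs \<le> (\<Sum>n\<in>N. of_bool (xs ! a = xs ! b) * (\<Prod>i<h. G n (xs ! i)))"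
    and Bp: "\<And>n. n \<in> N \<Longrightarrow> (\<integral>\<^sup>+x. enn_powr (G n x) p \<partial>count_space UNIV) \<le> Bp"
  shows "(\<integral>\<^sup>+xs. enn_powr (\<Phi> xs) p \<partial>count_space {xs. length xs = h})
      \<le> Bp ^ (h - 2) * (\<integral>\<^sup>+x. enn_powr (\<Sum>n\<in>N. G n x * G n x) p \<partial>count_space UNIV)"
proof -
  define W where "W x = (\<Sum>n\<in>N. G n x * G n x)" for x
  define \<Psi> where "\<Psi> n x = enn_powr (W x) (p - 1) * (G n x * G n x)" for n x
  define \<phi> where "\<phi> n x = enn_powr (G n x) p" for n x
  have pw: "enn_powr (\<Phi> xs) p \<le> (\<Sum>n\<in>N. of_bool (xs ! a = xs ! b) * \<Psi> n (xs ! a) * (\<Prod>i\<in>{..<h} - {a, b}. \<phi> n (xs ! i)))"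
    if len: "length xs = h" for xs
  proof -
    define e where "e = (of_bool (xs ! a = xs ! b) :: ennreal)"
    define w where "w n = e * G n (xs ! a) * G n (xs ! b)" for n
    define v where "v n = (\<Prod>i\<in>{..<h} - {a, b}. G n (xs ! i))" for n
    have "(\<Sum>n\<in>N. of_bool (xs ! a = xs ! b) * (\<Prod>i<h. G n (xs ! i))) = (\<Sum>n\<in>N. w n * v n)"
    proof (intro sum.cong refl)
      fix n
      show "of_bool (xs ! a = xs ! b) * (\<Prod>i<h. G n (xs ! i)) = w n * v n"
        unfolding prod_two_out[OF ab, of "\<lambda>i. G n (xs ! i)"] w_def v_def e_def by (simp add: mult_ac)
    qed
    then have "\<Phi> xs \<le> (\<Sum>n\<in>N. w n * v n)" using Phi[OF len] by simp
    then have "enn_powr (\<Phi> xs) p \<le> enn_powr (\<Sum>n\<in>N. w n * v n) p"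
      using p by (intro enn_powr_mono) auto
    also have "\<dots> \<le> enn_powr (\<Sum>n\<in>N. w n) (p - 1) * (\<Sum>n\<in>N. w n * enn_powr (v n) p)"
      using jensen_fin[OF N, of p w v] p by simp
    also have "\<dots> = (\<Sum>n\<in>N. of_bool (xs ! a = xs ! b) * \<Psi> n (xs ! a) * (\<Prod>i\<in>{..<h} - {a, b}. \<phi> n (xs ! i)))"
    proof (cases "xs ! a = xs ! b")
      case True
      have "(\<Sum>n\<in>N. w n) = W (xs ! a)" using True by (simp add: w_def e_def W_def)
      moreover have "enn_powr (v n) p = (\<Prod>i\<in>{..<h} - {a, b}. \<phi> n (xs ! i))" for n
        using p by (simp add: v_def \<phi>_def enn_powr_prod)
      ultimately show ?thesis using True
        by (simp add: w_def e_def \<Psi>_def sum_distrib_left mult_ac)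
    next
      case False
      then show ?thesis by (simp add: w_def e_def)
    qed
    finally show ?thesis .
  qed
  have "(\<integral>\<^sup>+xs. enn_powr (\<Phi> xs) p \<partial>count_space {xs. length xs = h})
      \<le> (\<integral>\<^sup>+xs. (\<Sum>n\<in>N. of_bool (xs ! a = xs ! b) * \<Psi> n (xs ! a) * (\<Prod>i\<in>{..<h} - {a, b}. \<phi> n (xs ! i))) \<partial>count_space {xs. length xs = h})"
    by (intro nn_integral_mono pw) auto
  also have "\<dots> = (\<Sum>n\<in>N. (\<integral>\<^sup>+x. \<Psi> n x \<partial>count_space UNIV) * (\<integral>\<^sup>+x. \<phi> n x \<partial>count_space UNIV) ^ (h - 2))"
    by (simp add: nn_integral_sum list_pair_integral[OF ab])
  also have "\<dots> \<le> (\<Sum>n\<in>N. (\<integral>\<^sup>+x. \<Psi> n x \<partial>count_space UNIV) * Bp ^ (h - 2))"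
    using Bp by (intro sum_mono mult_left_mono power_mono) (auto simp: \<phi>_def)
  also have "\<dots> = Bp ^ (h - 2) * (\<integral>\<^sup>+x. (\<Sum>n\<in>N. \<Psi> n x) \<partial>count_space UNIV)"
    by (simp add: nn_integral_sum sum_distrib_left mult.commute)
  also have "(\<integral>\<^sup>+x. (\<Sum>n\<in>N. \<Psi> n x) \<partial>count_space UNIV) = (\<integral>\<^sup>+x. enn_powr (W x) p \<partial>count_space UNIV)"
  proof (intro nn_integral_cong)
    fix x
    have "(\<Sum>n\<in>N. \<Psi> n x) = enn_powr (W x) (p - 1) * W x"
      by (simp add: \<Psi>_def W_def sum_distrib_left)
    also have "\<dots> = enn_powr (W x) p"
      using enn_powr_add_exp[of "p - 1" 1 "W x"] p by simp
    finally show "(\<Sum>n\<in>N. \<Psi> n x) = enn_powr (W x) p" .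
  qed
  finally show ?thesis by (simp add: W_def)
qed


lemma conv_trans1:
  fixes k :: "'a::ab_group_add \<Rightarrow> ennreal"
  shows "(\<integral>\<^sup>+z. k (x - z) \<partial>count_space UNIV) = (\<integral>\<^sup>+z. k z \<partial>count_space UNIV)"
proof -
  have "bij_betw (\<lambda>z. x - z) UNIV UNIV"
    by (rule bij_betwI[where g = "\<lambda>z. x - z"]) auto
  from nn_integral_bij_count_space[OF this, of k] show ?thesis .
qed

lemma conv_trans2:
  fixes k :: "'a::ab_group_add \<Rightarrow> ennreal"
  shows "(\<integral>\<^sup>+x. k (x - z) \<partial>count_space UNIV) = (\<integral>\<^sup>+z. k z \<partial>count_space UNIV)"
proof -
  have "bij_betw (\<lambda>x. x - z) UNIV UNIV"
    by (rule bij_betwI[where g = "\<lambda>x. x + z"]) auto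
  from nn_integral_bij_count_space[OF this, of k] show ?thesis .
qed

lemma conv_pt:
  fixes k F :: "'a::ab_group_add \<Rightarrow> ennreal"
  assumes s: "s \<ge> 1" and k1: "(\<integral>\<^sup>+z. k z \<partial>count_space UNIV) \<le> K1"
    and kinf: "\<And>z. k z \<le> Kinf"
  shows "enn_powr (\<integral>\<^sup>+z. k (x - z) * F z \<partial>count_space UNIV) s
      \<le> enn_powr K1 (s - 1) * (Kinf * (\<integral>\<^sup>+z. enn_powr (F z) s \<partial>count_space UNIV))"
proof -
  have "enn_powr (\<integral>\<^sup>+z. k (x - z) * F z \<partial>count_space UNIV) s
      \<le> enn_powr (\<integral>\<^sup>+z. k (x - z) \<partial>count_space UNIV) (s - 1) * (\<integral>\<^sup>+z. k (x - z) * enn_powr (F z) s \<partial>count_space UNIV)"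
    by (rule jensen_nn[OF s])
  also have "\<dots> \<le> enn_powr K1 (s - 1) * (\<integral>\<^sup>+z. Kinf * enn_powr (F z) s \<partial>count_space UNIV)"
  proof (rule mult_mono)
    show "enn_powr (\<integral>\<^sup>+z. k (x - z) \<partial>count_space UNIV) (s - 1) \<le> enn_powr K1 (s - 1)"
      by (rule enn_powr_mono) (use s k1 in \<open>simp_all add: conv_trans1\<close>)
    show "(\<integral>\<^sup>+z. k (x - z) * enn_powr (F z) s \<partial>count_space UNIV) \<le> (\<integral>\<^sup>+z. Kinf * enn_powr (F z) s \<partial>count_space UNIV)"
      by (intro nn_integral_mono mult_right_mono kinf) simp
  qed simp_all
  finally show ?thesis by (simp add: nn_integral_cmult)
qed

lemma conv_int:
  fixes k F :: "'a::{ab_group_add,countable} \<Rightarrow> ennreal"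
  assumes s: "s \<ge> 1" and k1: "(\<integral>\<^sup>+z. k z \<partial>count_space UNIV) \<le> K1"
  shows "(\<integral>\<^sup>+x. enn_powr (\<integral>\<^sup>+z. k (x - z) * F z \<partial>count_space UNIV) s \<partial>count_space UNIV)
      \<le> enn_powr K1 (s - 1) * (K1 * (\<integral>\<^sup>+z. enn_powr (F z) s \<partial>count_space UNIV))"
proof -
  have "(\<integral>\<^sup>+x. enn_powr (\<integral>\<^sup>+z. k (x - z) * F z \<partial>count_space UNIV) s \<partial>count_space UNIV)
      \<le> (\<integral>\<^sup>+x. enn_powr K1 (s - 1) * (\<integral>\<^sup>+z. k (x - z) * enn_powr (F z) s \<partial>count_space UNIV) \<partial>count_space UNIV)"
  proof (intro nn_integral_mono)
    fix x
    have "enn_powr (\<integral>\<^sup>+z. k (x - z) * F z \<partial>count_space UNIV) s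
      \<le> enn_powr (\<integral>\<^sup>+z. k (x - z) \<partial>count_space UNIV) (s - 1) * (\<integral>\<^sup>+z. k (x - z) * enn_powr (F z) s \<partial>count_space UNIV)"
      by (rule jensen_nn[OF s])
    also have "\<dots> \<le> enn_powr K1 (s - 1) * (\<integral>\<^sup>+z. k (x - z) * enn_powr (F z) s \<partial>count_space UNIV)"
    proof (rule mult_right_mono)
      show "enn_powr (\<integral>\<^sup>+z. k (x - z) \<partial>count_space UNIV) (s - 1) \<le> enn_powr K1 (s - 1)"
        by (rule enn_powr_mono) (use s k1 in \<open>simp_all add: conv_trans1\<close>)
    qed simp
    finally show "enn_powr (\<integral>\<^sup>+z. k (x - z) * F z \<partial>count_space UNIV) s
      \<le> enn_powr K1 (s - 1) * (\<integral>\<^sup>+z. k (x - z) * enn_powr (F z) s \<partial>count_space UNIV)" .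
  qed
  also have "\<dots> = enn_powr K1 (s - 1) * (\<integral>\<^sup>+z. \<integral>\<^sup>+x. k (x - z) * enn_powr (F z) s \<partial>count_space UNIV \<partial>count_space UNIV)"
  proof -
    have "(\<integral>\<^sup>+x. \<integral>\<^sup>+z. k (x - z) * enn_powr (F z) s \<partial>count_space UNIV \<partial>count_space UNIV)
        = (\<integral>\<^sup>+z. \<integral>\<^sup>+x. k (x - z) * enn_powr (F z) s \<partial>count_space UNIV \<partial>count_space UNIV)"
      by (rule nn_integral_count_space_nn_integral) auto
    then show ?thesis by (subst nn_integral_cmult) simp_all
  qed
  also have "\<dots> = enn_powr K1 (s - 1) * (\<integral>\<^sup>+z. (\<integral>\<^sup>+z. k z \<partial>count_space UNIV) * enn_powr (F z) s \<partial>count_space UNIV)"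
    by (simp add: nn_integral_multc conv_trans2)
  also have "\<dots> \<le> enn_powr K1 (s - 1) * (\<integral>\<^sup>+z. K1 * enn_powr (F z) s \<partial>count_space UNIV)"
    by (intro mult_left_mono nn_integral_mono mult_right_mono k1) simp_all
  finally show ?thesis by (simp add: nn_integral_cmult)
qed

lemma conv_sup:
  fixes k F :: "'a::ab_group_add \<Rightarrow> ennreal"
  assumes k1: "(\<integral>\<^sup>+z. k z \<partial>count_space UNIV) \<le> K1" and F: "\<And>z. F z \<le> M"
  shows "(\<integral>\<^sup>+z. k (x - z) * F z \<partial>count_space UNIV) \<le> K1 * M"
proof -
  have "(\<integral>\<^sup>+z. k (x - z) * F z \<partial>count_space UNIV) \<le> (\<integral>\<^sup>+z. k (x - z) * M \<partial>count_space UNIV)"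
    using F by (intro nn_integral_mono mult_left_mono) auto
  also have "\<dots> = (\<integral>\<^sup>+z. k z \<partial>count_space UNIV) * M"
    by (simp add: nn_integral_multc conv_trans1)
  also have "\<dots> \<le> K1 * M" by (intro mult_right_mono k1) simp
  finally show ?thesis .
qed


lemma step_concave:
  fixes d :: real and n :: nat
  assumes d: "0 < d" "d \<le> 1" and n: "n \<ge> 1"
  shows "d * real n powr (d - 1) \<le> real n powr d - real (n - 1) powr d"
proof (cases "n = 1")
  case True then show ?thesis using d by simp
next
  case False
  then have n2: "n \<ge> 2" using n by simp
  have "real (n - 1) powr d * real n powr (1 - d) \<le> d * real (n - 1) + (1 - d) * real n"
    using Youngs_inequality_0[of d "1 - d" "real (n - 1)" "real n"] d n2 by simp
  also have "\<dots> = real n - d" using n2 by (simp add: of_nat_diff algebra_simps)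
  finally have A: "real (n - 1) powr d * real n powr (1 - d) \<le> real n - d" .
  have pos: "real n powr (1 - d) > 0" using n2 by simp
  have "real (n - 1) powr d \<le> (real n - d) / real n powr (1 - d)"
    using A pos by (simp add: field_simps)
  also have "\<dots> = real n powr d - d * real n powr (d - 1)"
    using n2 by (simp add: field_simps powr_diff powr_add[symmetric])
  finally show ?thesis by simp
qed

lemma sum_powr_le:
  fixes d :: real
  assumes d: "0 < d" "d \<le> 1"
  shows "(\<Sum>n\<in>{1..M}. real n powr (d - 1)) \<le> real M powr d / d"
proof (induction M)
  case 0 then show ?case by simp
next
  case (Suc M)
  have "(\<Sum>n\<in>{1..Suc M}. real n powr (d - 1)) = (\<Sum>n\<in>{1..M}. real n powr (d - 1)) + real (Suc M) powr (d - 1)"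
    by simp
  also have "\<dots> \<le> real M powr d / d + real (Suc M) powr (d - 1)"
    using Suc by simp
  also have "\<dots> \<le> real (Suc M) powr d / d"
  proof -
    have "d * real (Suc M) powr (d - 1) \<le> real (Suc M) powr d - real M powr d"
      using step_concave[OF d, of "Suc M"] by simp
    then have "real (Suc M) powr (d - 1) \<le> (real (Suc M) powr d - real M powr d) / d"
      using d by (simp add: pos_le_divide_eq mult.commute)
    then show ?thesis by (simp add: diff_divide_distrib)
  qed
  finally show ?case .
qed

lemma step_convex:
  fixes u :: real and n :: nat
  assumes u: "0 < u" and n: "n \<ge> 2"
  shows "u * real n powr (-1 - u) \<le> real (n - 1) powr (-u) - real n powr (-u)"
proof -
  define x where "x = 1 / real n"
  have x: "0 < x" "x < 1" using n by (auto simp: x_def)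
  have "ln (1 - x) \<le> (1 - x) - 1" using x by (intro ln_le_minus_one) auto
  then have "u * ln (1 - x) \<le> u * (- x)" using u by (intro mult_left_mono) auto
  then have "1 + u * x \<le> 1 + (- u * ln (1 - x))" by simp
  also have "\<dots> \<le> exp (- u * ln (1 - x))" by (rule exp_ge_add_one_self)
  also have "\<dots> = (1 - x) powr (-u)" using x by (simp add: powr_def)
  finally have B: "1 + u * x \<le> (1 - x) powr (-u)" .
  have "real (n - 1) = real n * (1 - x)" using n by (simp add: x_def of_nat_diff field_simps)
  then have "real (n - 1) powr (-u) = real n powr (-u) * (1 - x) powr (-u)"
    using x n by (simp add: powr_mult)
  moreover have "real n powr (-u) * (1 + u * x) \<le> real n powr (-u) * (1 - x) powr (-u)"
    using B by (intro mult_left_mono) auto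
  moreover have "real n powr (-u) * (1 + u * x) = real n powr (-u) + u * real n powr (-1 - u)"
    using n by (simp add: x_def field_simps powr_diff powr_add powr_minus)
  ultimately show ?thesis by simp
qed

lemma sum_tail_le:
  fixes u :: real
  assumes u: "0 < u" and K: "K \<ge> 1" and M: "M \<ge> K"
  shows "(\<Sum>n\<in>{K+1..M}. real n powr (-1 - u)) \<le> (real K powr (-u) - real M powr (-u)) / u"
  using M
proof (induction M)
  case 0 then show ?case using K by simp
next
  case (Suc M)
  show ?case
  proof (cases "Suc M = K")
    case True then show ?thesis by simp
  next
    case False
    then have MK: "M \<ge> K" using Suc.prems by simp
    have "(\<Sum>n\<in>{K+1..Suc M}. real n powr (-1 - u)) = (\<Sum>n\<in>{K+1..M}. real n powr (-1 - u)) + real (Suc M) powr (-1 - u)"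
      using MK by simp
    also have "\<dots> \<le> (real K powr (-u) - real M powr (-u)) / u + real (Suc M) powr (-1 - u)"
      using Suc.IH[OF MK] by simp
    also have "\<dots> \<le> (real K powr (-u) - real (Suc M) powr (-u)) / u"
    proof -
      have "u * real (Suc M) powr (-1 - u) \<le> real M powr (-u) - real (Suc M) powr (-u)"
        using step_convex[OF u, of "Suc M"] MK K by simp
      then have "real (Suc M) powr (-1 - u) \<le> (real M powr (-u) - real (Suc M) powr (-u)) / u"
        using u by (simp add: pos_le_divide_eq mult.commute)
      then show ?thesis by (simp add: diff_divide_distrib)
    qed
    finally show ?thesis .
  qed
qed


lemma pprime_sum:
  fixes a b P R :: real and L :: nat and x :: "nat \<Rightarrow> real"
  assumes ab: "0 < b" "b < a" "a \<le> 1" and PR: "P > 0" "R > 0"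
    and x1: "\<And>n. n \<in> {1..L} \<Longrightarrow> x n \<le> real n powr (-b) * P\<^sup>2"
    and x2: "\<And>n. n \<in> {1..L} \<Longrightarrow> x n \<le> real n powr (-(2*a-b)) * R\<^sup>2"
  shows "(\<Sum>n\<in>{1..L}. x n) \<le> 4 / (1 - b) * real L powr (1 - a) * R * P"
proof (cases "L = 0")
  case True then show ?thesis by simp
next
  case False
  then have L1: "L \<ge> 1" by simp
  define u where "u = a - b"
  define d where "d = 1 - a"
  define \<rho> where "\<rho> = R / P"
  define \<Lambda> where "\<Lambda> = real L powr d"
  have u: "0 < u" "u < 1" using ab by (auto simp: u_def)
  have d: "0 \<le> d" "d < 1" using ab by (auto simp: d_def)
  have rho: "\<rho> > 0" using PR by (simp add: \<rho>_def)
  have Lam: "\<Lambda> \<ge> 1" using L1 d by (simp add: \<Lambda>_def ge_one_powr_ge_zero)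
  have RP: "R * P > 0" using PR by simp
  have P2: "P\<^sup>2 * \<rho> = R * P" using PR by (simp add: \<rho>_def power2_eq_square)
  have R2: "R\<^sup>2 / \<rho> = R * P" using PR by (simp add: \<rho>_def power2_eq_square)
  have nd: "real n powr d \<le> \<Lambda>" if "n \<in> {1..L}" for n
    using that d by (auto simp: \<Lambda>_def intro!: powr_mono2)
  have e1: "real n powr (-b) = real n powr d * real n powr (u - 1)" if "n \<ge> 1" for n
    using that by (simp add: powr_add[symmetric] u_def d_def)
  have e2: "real n powr (-(2*a-b)) = real n powr d * real n powr (-1 - u)" if "n \<ge> 1" for n
    using that by (simp add: powr_add[symmetric] u_def d_def)
  have e3: "real n powr (-b) = real n powr (-a) * real n powr u" if "n \<ge> 1" for n
    using that by (simp add: powr_add[symmetric] u_def)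
  have e4: "real n powr (-(2*a-b)) = real n powr (-a) / real n powr u" if "n \<ge> 1" for n
    using that by (simp add: powr_diff[symmetric] u_def)
  have gen: "x n \<le> R * P * real n powr (-a)" if n: "n \<in> {1..L}" for n
  proof (cases "real n powr u \<le> \<rho>")
    case True
    have "x n \<le> real n powr (-a) * real n powr u * P\<^sup>2" using x1[OF n] e3[of n] n by simp
    also have "\<dots> \<le> real n powr (-a) * \<rho> * P\<^sup>2"
      using True by (intro mult_right_mono mult_left_mono) auto
    also have "\<dots> = real n powr (-a) * (P\<^sup>2 * \<rho>)" by (simp add: mult_ac)
    also have "\<dots> = real n powr (-a) * (R * P)" by (simp only: P2)
    finally show ?thesis by (simp add: mult_ac)
  next
    case False
    have pos: "real n powr u > 0" using n by simp
    have "x n \<le> real n powr (-a) / real n powr u * R\<^sup>2" using x2[OF n] e4[of n] n by simp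
    also have "\<dots> \<le> real n powr (-a) / \<rho> * R\<^sup>2"
      using False rho pos by (intro mult_right_mono divide_left_mono) auto
    also have "\<dots> = real n powr (-a) * (R\<^sup>2 / \<rho>)" by simp
    also have "\<dots> = real n powr (-a) * (R * P)" by (simp only: R2)
    finally show ?thesis by (simp add: mult_ac)
  qed
  define N where "N = \<rho> powr (1 / u)"
  define K where "K = nat \<lfloor>N\<rfloor>"
  have Npos: "N > 0" using rho by (simp add: N_def)
  have NK: "real K \<le> N" "N < real K + 1" using Npos by (auto simp: K_def)
  have Nu: "N powr u = \<rho>" using rho u by (simp add: N_def powr_powr)
  have Nmu: "N powr (-u) = 1 / \<rho>" using Nu Npos by (simp add: powr_minus divide_inverse)
  have Ku: "real K powr u \<le> \<rho>" using NK u Nu by (metis less_imp_le of_nat_0_le_iff powr_mono2)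
  have K1u: "real (K + 1) powr (-u) \<le> 1 / \<rho>"
    using NK Npos u Nmu powr_mono2'[of "-u" N "real (K + 1)"] by simp
  define f1 where "f1 n = (if n \<le> K then \<Lambda> * P\<^sup>2 * real n powr (u - 1) else 0)" for n
  define f2 where "f2 n = (if n = K + 1 then R * P * \<Lambda> else 0)" for n
  define f3 where "f3 n = (if K + 2 \<le> n then \<Lambda> * R\<^sup>2 * real n powr (-1 - u) else 0)" for n
  have xf: "x n \<le> f1 n + f2 n + f3 n" if n: "n \<in> {1..L}" for n
  proof -
    have n1: "n \<ge> 1" using n by simp
    consider "n \<le> K" | "n = K + 1" | "K + 2 \<le> n" by linarith
    then show ?thesis
    proof cases
      case 1
      have "x n \<le> real n powr d * real n powr (u - 1) * P\<^sup>2" using x1[OF n] e1[OF n1] by simp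
      also have "\<dots> \<le> \<Lambda> * real n powr (u - 1) * P\<^sup>2"
        using nd[OF n] by (intro mult_right_mono) auto
      finally show ?thesis using 1 by (simp add: f1_def f2_def f3_def mult_ac)
    next
      case 2
      have "real n powr (-a) \<le> 1" using n1 ab powr_mono[of "-a" 0 "real n"] by simp
      then have "x n \<le> R * P * 1" using gen[OF n] RP by (meson mult_left_mono less_imp_le order_trans)
      also have "\<dots> \<le> R * P * \<Lambda>" using Lam RP by (intro mult_left_mono) auto
      finally show ?thesis using 2 by (simp add: f1_def f2_def f3_def)
    next
      case 3
      have "x n \<le> real n powr d * real n powr (-1 - u) * R\<^sup>2" using x2[OF n] e2[OF n1] by simp
      also have "\<dots> \<le> \<Lambda> * real n powr (-1 - u) * R\<^sup>2"
        using nd[OF n] by (intro mult_right_mono) auto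
      finally show ?thesis using 3 by (simp add: f1_def f2_def f3_def mult_ac)
    qed
  qed
  have S1: "(\<Sum>n\<in>{1..L}. f1 n) \<le> \<Lambda> * P\<^sup>2 * (\<rho> / u)"
  proof -
    have "(\<Sum>n\<in>{1..L}. f1 n) = (\<Sum>n\<in>{1..L} \<inter> {..K}. \<Lambda> * P\<^sup>2 * real n powr (u - 1))"
      by (simp add: f1_def sum.If_cases Int_def)
    also have "\<dots> \<le> (\<Sum>n\<in>{1..K}. \<Lambda> * P\<^sup>2 * real n powr (u - 1))"
      using Lam by (intro sum_mono2) auto
    also have "\<dots> = \<Lambda> * P\<^sup>2 * (\<Sum>n\<in>{1..K}. real n powr (u - 1))"
      by (simp add: sum_distrib_left)
    also have "\<dots> \<le> \<Lambda> * P\<^sup>2 * (real K powr u / u)"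
      using sum_powr_le[of u K] u Lam by (intro mult_left_mono) auto
    also have "\<dots> \<le> \<Lambda> * P\<^sup>2 * (\<rho> / u)"
      using Ku u Lam by (intro mult_left_mono divide_right_mono) auto
    finally show ?thesis .
  qed
  have S2: "(\<Sum>n\<in>{1..L}. f2 n) \<le> R * P * \<Lambda>"
    using RP Lam by (simp add: f2_def sum.delta)
  have S3: "(\<Sum>n\<in>{1..L}. f3 n) \<le> \<Lambda> * R\<^sup>2 * (1 / \<rho> / u)"
  proof -
    have "(\<Sum>n\<in>{1..L}. f3 n) = (\<Sum>n\<in>{1..L} \<inter> {n. K + 2 \<le> n}. \<Lambda> * R\<^sup>2 * real n powr (-1 - u))"
      by (simp add: f3_def sum.If_cases Int_def)
    also have "{1..L} \<inter> {n. K + 2 \<le> n} = {(K + 1) + 1..L}" by auto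
    also have "(\<Sum>n\<in>{(K + 1) + 1..L}. \<Lambda> * R\<^sup>2 * real n powr (-1 - u)) = \<Lambda> * R\<^sup>2 * (\<Sum>n\<in>{(K + 1) + 1..L}. real n powr (-1 - u))"
      by (simp add: sum_distrib_left)
    also have "(\<Sum>n\<in>{(K + 1) + 1..L}. real n powr (-1 - u)) \<le> 1 / \<rho> / u"
    proof (cases "L \<ge> K + 1")
      case True
      have "(\<Sum>n\<in>{(K + 1) + 1..L}. real n powr (-1 - u)) \<le> (real (K + 1) powr (-u) - real L powr (-u)) / u"
        using sum_tail_le[OF u(1) _ True] by simp
      also have "\<dots> \<le> real (K + 1) powr (-u) / u"
        using u by (intro divide_right_mono) auto
      also have "\<dots> \<le> 1 / \<rho> / u" using K1u u by (intro divide_right_mono) auto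
      finally show ?thesis .
    next
      case False
      then have "{(K + 1) + 1..L} = {}" by auto
      then show ?thesis using rho u by simp
    qed
    then have "\<Lambda> * R\<^sup>2 * (\<Sum>n\<in>{(K + 1) + 1..L}. real n powr (-1 - u)) \<le> \<Lambda> * R\<^sup>2 * (1 / \<rho> / u)"
      using Lam by (intro mult_left_mono) auto
    finally show ?thesis .
  qed
  have boundi: "(\<Sum>n\<in>{1..L}. x n) \<le> \<Lambda> * (R * P) * (3 / u)"
  proof -
    have "(\<Sum>n\<in>{1..L}. x n) \<le> (\<Sum>n\<in>{1..L}. f1 n + f2 n + f3 n)"
      by (intro sum_mono xf)
    also have "\<dots> = (\<Sum>n\<in>{1..L}. f1 n) + (\<Sum>n\<in>{1..L}. f2 n) + (\<Sum>n\<in>{1..L}. f3 n)"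
      by (simp add: sum.distrib)
    also have "\<dots> \<le> \<Lambda> * P\<^sup>2 * (\<rho> / u) + R * P * \<Lambda> + \<Lambda> * R\<^sup>2 * (1 / \<rho> / u)"
      using S1 S2 S3 by linarith
    also have "\<Lambda> * P\<^sup>2 * (\<rho> / u) = \<Lambda> * (R * P) * (1 / u)"
      using P2 by (simp add: field_simps)
    also have "\<Lambda> * R\<^sup>2 * (1 / \<rho> / u) = \<Lambda> * (R * P) * (1 / u)"
      using R2 rho u by (simp add: field_simps)
    also have "R * P * \<Lambda> \<le> \<Lambda> * (R * P) * (1 / u)"
    proof -
      have "1 \<le> 1 / u" using u by simp
      then have "\<Lambda> * (R * P) * 1 \<le> \<Lambda> * (R * P) * (1 / u)"
        using Lam RP by (intro mult_left_mono) auto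
      then show ?thesis by (simp add: mult_ac)
    qed
    finally show ?thesis by (simp add: field_simps)
  qed
  have bd: "u + d = 1 - b" by (simp add: u_def d_def)
  have C0: "\<Lambda> * (R * P) > 0" using Lam RP by simp
  have fin: "\<Lambda> * (R * P) * (4 / (u + d)) = 4 / (1 - b) * real L powr (1 - a) * R * P"
    unfolding bd by (simp add: \<Lambda>_def d_def mult_ac)
  show ?thesis
  proof (cases "3 * d \<le> u")
    case True
    have "3 / u \<le> 4 / (u + d)" using True u d by (simp add: field_simps)
    then have "\<Lambda> * (R * P) * (3 / u) \<le> \<Lambda> * (R * P) * (4 / (u + d))"
      using C0 by (intro mult_left_mono) auto
    then show ?thesis using boundi fin by linarith
  next
    case False
    then have dpos: "d > 0" using u by simp
    have boundii: "(\<Sum>n\<in>{1..L}. x n) \<le> \<Lambda> * (R * P) * (1 / d)"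
    proof -
      have "(\<Sum>n\<in>{1..L}. x n) \<le> (\<Sum>n\<in>{1..L}. R * P * real n powr (d - 1))"
        using gen by (intro sum_mono) (simp add: d_def)
      also have "\<dots> = R * P * (\<Sum>n\<in>{1..L}. real n powr (d - 1))" by (simp add: sum_distrib_left)
      also have "\<dots> \<le> R * P * (real L powr d / d)"
        using sum_powr_le[of d L] dpos d RP by (intro mult_left_mono) auto
      finally show ?thesis by (simp add: \<Lambda>_def field_simps)
    qed
    have "1 / d \<le> 4 / (u + d)" using False u dpos by (simp add: field_simps)
    then have "\<Lambda> * (R * P) * (1 / d) \<le> \<Lambda> * (R * P) * (4 / (u + d))"
      using C0 by (intro mult_left_mono) auto
    then show ?thesis using boundii fin by linarith
  qed
qed

lemma rprime_sum:
  fixes a :: real and L :: nat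
  assumes "0 \<le> a" "a < 1"
  shows "(\<Sum>n\<in>{1..L}. real n powr (-a)) \<le> real L powr (1 - a) / (1 - a)"
  using sum_powr_le[of "1 - a" L] assms by simp


lemma prod_mono_enn:
  fixes f g :: "'i \<Rightarrow> ennreal"
  assumes "\<And>i. i \<in> A \<Longrightarrow> f i \<le> g i"
  shows "prod f A \<le> prod g A"
  using assms
proof (induction A rule: infinite_finite_induct)
  case (insert x F)
  then show ?case by (simp add: mult_mono)
qed simp_all

lemma gg_bound:
  fixes G :: "'a \<Rightarrow> ennreal"
  assumes p: "p > 0" and A: "\<And>x. G x \<le> ennreal A" "A \<ge> 0" and B: "B \<ge> 0"
    and GB: "(\<integral>\<^sup>+x. enn_powr (G x) p \<partial>count_space UNIV) \<le> ennreal (B powr p)"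
  shows "(\<integral>\<^sup>+x. enn_powr (G x * G x) p \<partial>count_space UNIV) \<le> ennreal ((A * B) powr p)"
proof -
  have "(\<integral>\<^sup>+x. enn_powr (G x * G x) p \<partial>count_space UNIV)
      = (\<integral>\<^sup>+x. enn_powr (G x) p * enn_powr (G x) p \<partial>count_space UNIV)"
    using p by (simp add: enn_powr_mult)
  also have "\<dots> \<le> (\<integral>\<^sup>+x. ennreal (A powr p) * enn_powr (G x) p \<partial>count_space UNIV)"
  proof (intro nn_integral_mono mult_right_mono)
    fix x
    show "enn_powr (G x) p \<le> ennreal (A powr p)"
      using enn_powr_mono[OF A(1)[of x], of p] p A(2) by (simp add: enn_powr_ennreal)
  qed simp
  also have "\<dots> = ennreal (A powr p) * (\<integral>\<^sup>+x. enn_powr (G x) p \<partial>count_space UNIV)"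
    by (simp add: nn_integral_cmult)
  also have "\<dots> \<le> ennreal (A powr p) * ennreal (B powr p)"
    by (intro mult_left_mono GB) simp
  also have "\<dots> = ennreal ((A * B) powr p)"
    using A B by (simp add: ennreal_mult[symmetric] powr_mult)
  finally show ?thesis .
qed

lemma root_pt:
  assumes "enn_powr X s \<le> ennreal Y" "s > 0" "Y \<ge> 0"
  shows "X \<le> ennreal (Y powr (1 / s))"
proof -
  have "enn_powr (ennreal (Y powr (1 / s))) s = ennreal Y"
    using assms by (simp add: enn_powr_ennreal powr_powr)
  then show ?thesis using assms by (intro enn_powr_le_cancel[of X s]) simp_all
qed

lemma final_root:
  assumes "Q \<le> ennreal (X powr p)" "p > 0" "X \<ge> 0"
  shows "enn_powr Q (1 / p) \<le> ennreal X"
proof -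
  have "enn_powr Q (1 / p) \<le> enn_powr (ennreal (X powr p)) (1 / p)"
    using assms by (intro enn_powr_mono) auto
  also have "\<dots> = ennreal X" using assms by (simp add: enn_powr_ennreal powr_powr)
  finally show ?thesis .
qed

lemma zn_triangle: "zn x \<le> zn (x - z) + zn z"
proof -
  have e: "zn v = cmod (Complex (real_of_int (fst v)) (real_of_int (snd v)))" for v
    by (simp add: zn_def cmod_def)
  have "Complex (real_of_int (fst x)) (real_of_int (snd x))
      = Complex (real_of_int (fst (x - z))) (real_of_int (snd (x - z))) + Complex (real_of_int (fst z)) (real_of_int (snd z))"
    by (simp add: complex_eq_iff)
  then show ?thesis unfolding e by (metis norm_triangle_ineq)
qed

lemma zn_nonneg: "zn x \<ge> 0" by (simp add: zn_def)

lemma wt_pos: "wt t x > 0" by (simp add: wt_def)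

lemma inv_wt_le:
  assumes "t \<ge> 0"
  shows "1 / wt t x \<le> exp (t * zn (x - z)) * (1 / wt t z)"
proof -
  have "t * zn x \<le> t * zn (x - z) + t * zn z"
    using zn_triangle[of x z] assms by (simp add: mult_left_mono distrib_left[symmetric])
  then have "exp (t * zn x) \<le> exp (t * zn (x - z) + t * zn z)" by simp
  then show ?thesis by (simp add: wt_def exp_minus exp_add field_simps)
qed

lemma enn_div_pos: "0 < c \<Longrightarrow> X / ennreal c = X * ennreal (1 / c)"
  by (simp add: divide_ennreal_def inverse_ennreal divide_inverse)

lemma qabs_bound:
  fixes q1 :: "(int \<times> int) pmf" and f :: "int \<times> int \<Rightarrow> real"
  assumes t: "t \<ge> 0"
  shows "qabs q1 n f x / ennreal (wt t x)
    \<le> (\<integral>\<^sup>+z. ennreal (pmf (walk q1 n) (x - z) * exp (t * zn (x - z))) * ennreal (\<bar>f z\<bar> / wt t z) \<partial>count_space UNIV)"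
proof -
  have "qabs q1 n f x / ennreal (wt t x)
      = (\<integral>\<^sup>+z. ennreal (pmf (walk q1 n) (x - z) * \<bar>f z\<bar>) * ennreal (1 / wt t x) \<partial>count_space UNIV)"
    unfolding qabs_def by (simp add: enn_div_pos wt_pos nn_integral_multc)
  also have "\<dots> \<le> (\<integral>\<^sup>+z. ennreal (pmf (walk q1 n) (x - z) * exp (t * zn (x - z))) * ennreal (\<bar>f z\<bar> / wt t z) \<partial>count_space UNIV)"
  proof (intro nn_integral_mono)
    fix z
    have "pmf (walk q1 n) (x - z) * \<bar>f z\<bar> * (1 / wt t x)
        \<le> pmf (walk q1 n) (x - z) * \<bar>f z\<bar> * (exp (t * zn (x - z)) * (1 / wt t z))"
      using inv_wt_le[OF t, of x z] by (intro mult_left_mono) auto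
    also have "\<dots> = pmf (walk q1 n) (x - z) * exp (t * zn (x - z)) * (\<bar>f z\<bar> / wt t z)"
      by simp
    finally have "ennreal (pmf (walk q1 n) (x - z) * \<bar>f z\<bar> * (1 / wt t x))
        \<le> ennreal (pmf (walk q1 n) (x - z) * exp (t * zn (x - z)) * (\<bar>f z\<bar> / wt t z))"
      by (rule ennreal_leI)
    then show "ennreal (pmf (walk q1 n) (x - z) * \<bar>f z\<bar>) * ennreal (1 / wt t x)
        \<le> ennreal (pmf (walk q1 n) (x - z) * exp (t * zn (x - z))) * ennreal (\<bar>f z\<bar> / wt t z)"
      by (simp add: ennreal_mult[symmetric] wt_pos less_imp_le)
  qed
  finally show ?thesis .
qed

lemma exists_pair:
  assumes "partition_on {..<h} I" "I \<noteq> star h"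
  shows "\<exists>B\<in>I. \<exists>a\<in>B. \<exists>b\<in>B. a \<noteq> b"
proof (rule ccontr)
  assume nt: "\<not> ?thesis"
  have sing: "a = b" if "B \<in> I" "a \<in> B" "b \<in> B" for B a b
    using nt that by auto
  have ne: "B \<noteq> {}" if "B \<in> I" for B using assms(1) that by (auto simp: partition_on_def)
  have un: "\<Union>I = {..<h}" using assms(1) by (simp add: partition_on_def)
  have "I = star h"
  proof (intro equalityI subsetI)
    fix B assume B: "B \<in> I"
    then obtain i where i: "i \<in> B" using ne by auto
    have "B = {i}"
    proof (intro equalityI subsetI)
      fix j assume "j \<in> B" then show "j \<in> {i}" using sing[OF B i] by simp
    qed (use i in simp)
    moreover have "i \<in> \<Union>I" using B i by auto
    then have "i < h" using un by simp
    ultimately show "B \<in> star h" by (auto simp: star_def)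
  next
    fix B assume "B \<in> star h"
    then obtain i where i: "B = {i}" "i < h" by (auto simp: star_def)
    then have "i \<in> \<Union>I" using un by simp
    then obtain B' where B': "B' \<in> I" "i \<in> B'" by auto
    have "B' = {i}"
    proof (intro equalityI subsetI)
      fix j assume "j \<in> B'" then show "j \<in> {i}" using sing[OF B'(1) B'(2)] by simp
    qed (use B' in simp)
    then show "B \<in> I" using B' i by simp
  qed
  then show False using assms(2) by simp
qed

lemma sim_pair:
  assumes "sim xs I" "B \<in> I" "a \<in> B" "b \<in> B"
  shows "xs ! a = xs ! b"
  using assms unfolding sim_def by blast


lemma pow_powr: "(x::real) \<ge> 0 \<Longrightarrow> (x ^ k) powr p = (x powr p) ^ k"
  by (induction k) (simp_all add: powr_mult)

lemma powr_alg1: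
  fixes C m S s :: real
  assumes C: "C > 0" and m: "m \<ge> 1" and S: "S \<ge> 0" and s: "s \<ge> 1"
  shows "(C powr (s - 1) * ((C / m) * S)) powr (1 / s) = C * m powr (-1 / s) * S powr (1 / s)"
proof -
  have X: "(C * m powr (-1 / s) * S powr (1 / s)) powr s = C powr (s - 1) * ((C / m) * S)"
  proof -
    have "(C * m powr (-1 / s) * S powr (1 / s)) powr s = C powr s * (m powr (-1 / s)) powr s * (S powr (1 / s)) powr s"
      using C m S by (simp add: powr_mult)
    also have "(m powr (-1 / s)) powr s = m powr (-1)" using s by (simp add: powr_powr)
    also have "(S powr (1 / s)) powr s = S" using s S by (simp add: powr_powr)
    also have "C powr s = C powr (s - 1) * C" using C by (simp add: powr_diff)
    also have "m powr (-1) = 1 / m" using m by (simp add: powr_minus_divide)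
    finally show ?thesis by simp
  qed
  have "(C powr (s - 1) * ((C / m) * S)) powr (1 / s) = ((C * m powr (-1 / s) * S powr (1 / s)) powr s) powr (1 / s)"
    by (simp only: X)
  also have "\<dots> = C * m powr (-1 / s) * S powr (1 / s)"
    using s C m S by (simp add: powr_powr)
  finally show ?thesis .
qed


locale setting =
  fixes h :: nat and p :: real and L :: nat and C :: real
    and F :: "int \<times> int \<Rightarrow> ennreal" and G :: "nat \<Rightarrow> int \<times> int \<Rightarrow> ennreal"
    and \<Phi> :: "(int \<times> int) list \<Rightarrow> ennreal" and a b :: nat
  assumes h: "h \<ge> 2" and p: "p > 1" and L: "L \<ge> 1" and C: "C > 0"
    and ab: "a < h" "b < h" "a \<noteq> b"
    and H1: "\<And>xs. length xs = h \<Longrightarrow> \<Phi> xs \<le> (\<Sum>n\<in>{1..L}. of_bool (xs ! a = xs ! b) * (\<Prod>i<h. G n (xs ! i)))"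
    and H2: "\<And>n s x. n \<in> {1..L} \<Longrightarrow> s \<ge> 1 \<Longrightarrow> enn_powr (G n x) s
        \<le> enn_powr (ennreal C) (s - 1) * (ennreal (C / real n) * (\<integral>\<^sup>+z. enn_powr (F z) s \<partial>count_space UNIV))"
    and H3: "\<And>n s. n \<in> {1..L} \<Longrightarrow> s \<ge> 1 \<Longrightarrow> (\<integral>\<^sup>+x. enn_powr (G n x) s \<partial>count_space UNIV)
        \<le> enn_powr (ennreal C) (s - 1) * (ennreal C * (\<integral>\<^sup>+z. enn_powr (F z) s \<partial>count_space UNIV))"
    and H4: "\<And>n x. n \<in> {1..L} \<Longrightarrow> G n x \<le> ennreal C * (SUP z. F z)"
begin

definition LHS where
  "LHS = enn_powr (\<integral>\<^sup>+xs. enn_powr (\<Phi> xs) p \<partial>count_space {xs. length xs = h}) (1 / p)"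

lemma key:
  fixes c :: "nat \<Rightarrow> real" and B0 :: real
  assumes c: "\<And>n. n \<in> {1..L} \<Longrightarrow> c n > 0"
    and cb: "\<And>n. n \<in> {1..L} \<Longrightarrow> (\<integral>\<^sup>+x. enn_powr (G n x * G n x) p \<partial>count_space UNIV) \<le> ennreal (c n powr p)"
    and B0: "B0 \<ge> 0" "\<And>n. n \<in> {1..L} \<Longrightarrow> (\<integral>\<^sup>+x. enn_powr (G n x) p \<partial>count_space UNIV) \<le> ennreal (B0 powr p)"
  shows "LHS \<le> ennreal (B0 ^ (h - 2) * (\<Sum>n\<in>{1..L}. c n))"
proof -
  have sc: "(\<Sum>n\<in>{1..L}. c n) \<ge> 0" using c by (intro sum_nonneg) (auto intro: less_imp_le)
  have "(\<integral>\<^sup>+xs. enn_powr (\<Phi> xs) p \<partial>count_space {xs. length xs = h})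
      \<le> ennreal (B0 powr p) ^ (h - 2) * (\<integral>\<^sup>+x. enn_powr (\<Sum>n\<in>{1..L}. G n x * G n x) p \<partial>count_space UNIV)"
    by (rule core_bound[OF _ p ab H1 B0(2)]) auto
  also have "\<dots> \<le> ennreal (B0 powr p) ^ (h - 2) * ennreal ((\<Sum>n\<in>{1..L}. c n) powr p)"
    by (intro mult_left_mono mink_fin[OF _ p c cb]) auto
  also have "\<dots> = ennreal ((B0 ^ (h - 2) * (\<Sum>n\<in>{1..L}. c n)) powr p)"
    using B0(1) sc by (simp add: ennreal_power ennreal_mult[symmetric] powr_mult pow_powr)
  finally show ?thesis
    unfolding LHS_def using B0(1) sc p by (intro final_root) auto
qed

lemma pt_real:
  assumes n: "n \<in> {1..L}" and s: "s \<ge> 1" and S: "(\<integral>\<^sup>+z. enn_powr (F z) s \<partial>count_space UNIV) = ennreal S" "S \<ge> 0"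
  shows "G n x \<le> ennreal (C * real n powr (-1 / s) * S powr (1 / s))"
proof -
  have n1: "real n \<ge> 1" using n by simp
  have "enn_powr (G n x) s \<le> ennreal (C powr (s - 1) * ((C / real n) * S))"
    using H2[OF n s, of x] S C n1 by (simp add: enn_powr_ennreal ennreal_mult[symmetric])
  then have "G n x \<le> ennreal ((C powr (s - 1) * ((C / real n) * S)) powr (1 / s))"
    using s S C n1 by (intro root_pt) auto
  also have "(C powr (s - 1) * ((C / real n) * S)) powr (1 / s) = C * real n powr (-1 / s) * S powr (1 / s)"
    using powr_alg1[OF C n1 S(2) s] .
  finally show ?thesis .
qed

lemma int_real:
  assumes n: "n \<in> {1..L}" and s: "s \<ge> 1" and S: "(\<integral>\<^sup>+z. enn_powr (F z) s \<partial>count_space UNIV) = ennreal S" "S \<ge> 0"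
  shows "(\<integral>\<^sup>+x. enn_powr (G n x) s \<partial>count_space UNIV) \<le> ennreal ((C * S powr (1 / s)) powr s)"
proof -
  have "(\<integral>\<^sup>+x. enn_powr (G n x) s \<partial>count_space UNIV) \<le> ennreal (C powr (s - 1) * (C * S))"
    using H3[OF n s] S C by (simp add: enn_powr_ennreal ennreal_mult[symmetric])
  also have "C powr (s - 1) * (C * S) = (C * S powr (1 / s)) powr s"
    using C S s by (simp add: powr_mult powr_powr powr_diff field_simps)
  finally show ?thesis .
qed

lemma zero_case:
  assumes "\<And>z. F z = 0"
  shows "LHS = 0"
proof -
  have G0: "G n x = 0" if "n \<in> {1..L}" for n x
    using H4[OF that, of x] assms by simp
  have Phi0: "\<Phi> xs = 0" if "length xs = h" for xs
  proof -
    have pz: "(\<Prod>i<h. G n (xs ! i)) = 0" if "n \<in> {1..L}" for n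
    proof (rule prod_zero)
      show "\<exists>i\<in>{..<h}. G n (xs ! i) = 0" using G0[OF that] h by (intro bexI[where x=0]) auto
    qed simp
    have "\<Phi> xs \<le> (\<Sum>n\<in>{1..L}. of_bool (xs ! a = xs ! b) * (\<Prod>i<h. G n (xs ! i)))"
      using H1[OF \<open>length xs = h\<close>] .
    also have "\<dots> = 0"
      by (intro sum.neutral ballI) (simp only: pz mult_zero_right)
    finally have "\<Phi> xs \<le> 0" .
    then show ?thesis by simp
  qed
  have "(\<integral>\<^sup>+xs. enn_powr (\<Phi> xs) p \<partial>count_space {xs. length xs = h}) = 0"
    by (simp add: cs_int_0_iff Phi0)
  then show ?thesis unfolding LHS_def by simp
qed

end


lemma powr_alg2:
  fixes X m r p :: real
  assumes X: "X > 0" and m: "m \<ge> 1" and r: "r \<ge> 1" "r < p"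
  shows "(X * m powr (-1 / r)) * (((X * m powr (-1 / r)) powr (p - r) * X powr r) powr (1 / p))
       = m powr (-(2 * (1 / r) - 1 / p)) * X\<^sup>2"
proof -
  have p0: "p > 0" using r by simp
  have e1a: "(X * m powr (-1 / r)) powr (p - r) = X powr (p - r) * (m powr (-1 / r)) powr (p - r)"
    by (rule powr_mult)
  have e1b: "(m powr (-1 / r)) powr (p - r) = m powr (-(p - r) / r)"
    unfolding powr_powr by (rule arg_cong[where f="(powr) m"]) (use r p0 in \<open>simp add: field_simps\<close>)
  have e1: "(X * m powr (-1 / r)) powr (p - r) = X powr (p - r) * m powr (-(p - r) / r)"
    unfolding e1a e1b ..
  have e2: "X powr (p - r) * m powr (-(p - r) / r) * X powr r = X powr p * m powr (-(p - r) / r)"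
    using X by (simp add: powr_add[symmetric] mult_ac)
  have e3a: "(X powr p * m powr (-(p - r) / r)) powr (1 / p) = (X powr p) powr (1 / p) * (m powr (-(p - r) / r)) powr (1 / p)"
    by (rule powr_mult)
  have e3b: "(X powr p) powr (1 / p) = X" using X p0 by (simp add: powr_powr)
  have e3c: "(m powr (-(p - r) / r)) powr (1 / p) = m powr (-(p - r) / (r * p))"
    unfolding powr_powr by (rule arg_cong[where f="(powr) m"]) (use r p0 in \<open>simp add: field_simps\<close>)
  have e3: "(X powr p * m powr (-(p - r) / r)) powr (1 / p) = X * m powr (-(p - r) / (r * p))"
    unfolding e3a e3b e3c ..
  have "(X * m powr (-1 / r)) * (((X * m powr (-1 / r)) powr (p - r) * X powr r) powr (1 / p))
      = (X * m powr (-1 / r)) * (X * m powr (-(p - r) / (r * p)))"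
    unfolding e1 e2 e3 ..
  also have "\<dots> = X\<^sup>2 * (m powr (-1 / r) * m powr (-(p - r) / (r * p)))"
    by (simp add: power2_eq_square mult_ac)
  also have "m powr (-1 / r) * m powr (-(p - r) / (r * p)) = m powr (-1 / r + -(p - r) / (r * p))"
    by (rule powr_add[symmetric])
  also have "-1 / r + -(p - r) / (r * p) = -(2 * (1 / r) - 1 / p)"
    using r p0 by (simp add: field_simps)
  finally show ?thesis by simp
qed


context setting
begin

lemma Bp_bound:
  assumes Sp: "(\<integral>\<^sup>+z. enn_powr (F z) p \<partial>count_space UNIV) = ennreal Sp0" "Sp0 \<ge> 0" and n: "n \<in> {1..L}"
  shows "(\<integral>\<^sup>+x. enn_powr (G n x) p \<partial>count_space UNIV) \<le> ennreal ((C * Sp0 powr (1 / p)) powr p)"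
  using int_real[OF n _ Sp] p by simp

lemma claim_inf:
  assumes Sp: "(\<integral>\<^sup>+z. enn_powr (F z) p \<partial>count_space UNIV) = ennreal Sp0" "Sp0 > 0"
    and M: "(SUP z. F z) = ennreal M0" "M0 > 0"
  shows "LHS \<le> ennreal (C ^ h * real L * M0 * (Sp0 powr (1 / p)) ^ (h - 1))"
proof -
  define P0 where "P0 = Sp0 powr (1 / p)"
  have P0: "P0 > 0" using Sp by (simp add: P0_def)
  define c where "c n = (C * M0) * (C * P0)" for n :: nat
  have "LHS \<le> ennreal ((C * P0) ^ (h - 2) * (\<Sum>n\<in>{1..L}. c n))"
  proof (rule key)
    show "c n > 0" for n using C M P0 by (simp add: c_def)
    show "C * P0 \<ge> 0" using C P0 by simp
    show B: "(\<integral>\<^sup>+x. enn_powr (G n x) p \<partial>count_space UNIV) \<le> ennreal ((C * P0) powr p)" if "n \<in> {1..L}" for n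
      using Bp_bound[OF Sp(1) _ that] Sp(2) by (simp add: P0_def)
    show "(\<integral>\<^sup>+x. enn_powr (G n x * G n x) p \<partial>count_space UNIV) \<le> ennreal (c n powr p)" if n: "n \<in> {1..L}" for n
      unfolding c_def
    proof (rule gg_bound)
      show "G n x \<le> ennreal (C * M0)" for x using H4[OF n, of x] M C by (simp add: ennreal_mult)
    qed (use p C M P0 B[OF n] in auto)
  qed
  also have "(C * P0) ^ (h - 2) * (\<Sum>n\<in>{1..L}. c n) = C ^ h * real L * M0 * P0 ^ (h - 1)"
  proof -
    obtain k where k: "h = k + 2" using h by (metis add.commute le_Suc_ex)
    show ?thesis by (simp add: c_def k power_mult_distrib algebra_simps)
  qed
  finally show ?thesis by (simp add: P0_def)
qed

lemma claim_rge:
  assumes Sp: "(\<integral>\<^sup>+z. enn_powr (F z) p \<partial>count_space UNIV) = ennreal Sp0" "Sp0 > 0"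
    and Sr: "(\<integral>\<^sup>+z. enn_powr (F z) r0 \<partial>count_space UNIV) = ennreal Sr0" "Sr0 > 0"
    and r0: "r0 \<ge> p"
  shows "LHS \<le> ennreal (C ^ h * (real L powr (1 - 1 / r0) / (1 - 1 / r0)) * Sr0 powr (1 / r0) * (Sp0 powr (1 / p)) ^ (h - 1))"
proof -
  define P0 where "P0 = Sp0 powr (1 / p)"
  define R0 where "R0 = Sr0 powr (1 / r0)"
  have P0: "P0 > 0" using Sp by (simp add: P0_def)
  have R0: "R0 > 0" using Sr by (simp add: R0_def)
  have r1: "r0 > 1" using r0 p by simp
  define c where "c n = (C * real n powr (-1 / r0) * R0) * (C * P0)" for n :: nat
  have L1: "LHS \<le> ennreal ((C * P0) ^ (h - 2) * (\<Sum>n\<in>{1..L}. c n))"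
  proof (rule key)
    show "c n > 0" if "n \<in> {1..L}" for n using C R0 P0 that by (simp add: c_def)
    show "C * P0 \<ge> 0" using C P0 by simp
    show B: "(\<integral>\<^sup>+x. enn_powr (G n x) p \<partial>count_space UNIV) \<le> ennreal ((C * P0) powr p)" if "n \<in> {1..L}" for n
      using Bp_bound[OF Sp(1) _ that] Sp(2) by (simp add: P0_def)
    show "(\<integral>\<^sup>+x. enn_powr (G n x * G n x) p \<partial>count_space UNIV) \<le> ennreal (c n powr p)" if n: "n \<in> {1..L}" for n
      unfolding c_def
    proof (rule gg_bound)
      show "G n x \<le> ennreal (C * real n powr (-1 / r0) * R0)" for x
        using pt_real[OF n _ Sr(1)] r1 Sr(2) by (simp add: R0_def)
    qed (use p C R0 P0 B[OF n] in auto)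
  qed
  have "(\<Sum>n\<in>{1..L}. c n) = C * C * R0 * P0 * (\<Sum>n\<in>{1..L}. real n powr (-(1 / r0)))"
    by (simp add: c_def sum_distrib_left mult_ac)
  then have "(C * P0) ^ (h - 2) * (\<Sum>n\<in>{1..L}. c n) = (C * P0) ^ (h - 2) * (C * C * R0 * P0 * (\<Sum>n\<in>{1..L}. real n powr (-(1 / r0))))"
    by simp
  also have "(C * P0) ^ (h - 2) * (C * C * R0 * P0 * (\<Sum>n\<in>{1..L}. real n powr (-(1 / r0))))
      \<le> (C * P0) ^ (h - 2) * (C * C * R0 * P0 * (real L powr (1 - 1 / r0) / (1 - 1 / r0)))"
    using rprime_sum[of "1 / r0" L] r1 C R0 P0 by (intro mult_left_mono) auto
  also have "(C * P0) ^ (h - 2) * (C * C * R0 * P0 * (real L powr (1 - 1 / r0) / (1 - 1 / r0)))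
      = C ^ h * (real L powr (1 - 1 / r0) / (1 - 1 / r0)) * R0 * P0 ^ (h - 1)"
  proof -
    obtain k where k: "h = k + 2" using h by (metis add.commute le_Suc_ex)
    show ?thesis by (simp add: k power_mult_distrib algebra_simps)
  qed
  finally have R: "(C * P0) ^ (h - 2) * (\<Sum>n\<in>{1..L}. c n) \<le> C ^ h * (real L powr (1 - 1 / r0) / (1 - 1 / r0)) * R0 * P0 ^ (h - 1)" .
  show ?thesis using order_trans[OF L1 ennreal_leI[OF R]] by (simp add: P0_def R0_def)
qed

lemma claim_rlt:
  assumes Sp: "(\<integral>\<^sup>+z. enn_powr (F z) p \<partial>count_space UNIV) = ennreal Sp0" "Sp0 > 0"
    and Sr: "(\<integral>\<^sup>+z. enn_powr (F z) r0 \<partial>count_space UNIV) = ennreal Sr0" "Sr0 > 0"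
    and r0: "r0 \<ge> 1" "r0 < p"
  shows "LHS \<le> ennreal (C ^ h * (4 / (1 - 1 / p) * real L powr (1 - 1 / r0)) * Sr0 powr (1 / r0) * (Sp0 powr (1 / p)) ^ (h - 1))"
proof -
  define P0 where "P0 = Sp0 powr (1 / p)"
  define R0 where "R0 = Sr0 powr (1 / r0)"
  have P0: "P0 > 0" using Sp by (simp add: P0_def)
  have R0: "R0 > 0" using Sr by (simp add: R0_def)
  define A1 where "A1 n = C * real n powr (-1 / p) * P0" for n :: nat
  define A2 where "A2 n = (C * R0) * real n powr (-1 / r0)" for n :: nat
  define B2 where "B2 n = (A2 n powr (p - r0) * (C * R0) powr r0) powr (1 / p)" for n :: nat
  define c where "c n = min (A1 n * (C * P0)) (A2 n * B2 n)" for n :: nat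
  have Bp: "(\<integral>\<^sup>+x. enn_powr (G n x) p \<partial>count_space UNIV) \<le> ennreal ((C * P0) powr p)" if "n \<in> {1..L}" for n
    using Bp_bound[OF Sp(1) _ that] Sp(2) by (simp add: P0_def)
  have GA1: "G n x \<le> ennreal (A1 n)" if "n \<in> {1..L}" for n x
    using pt_real[OF that _ Sp(1)] p Sp(2) by (simp add: A1_def P0_def)
  have GA2: "G n x \<le> ennreal (A2 n)" if "n \<in> {1..L}" for n x
    using pt_real[OF that _ Sr(1)] r0 Sr(2) by (simp add: A2_def R0_def mult_ac)
  have A1pos: "A1 n > 0" "A2 n > 0" "B2 n > 0" if "n \<in> {1..L}" for n
    using that C P0 R0 by (auto simp: A1_def A2_def B2_def)
  have Br: "(\<integral>\<^sup>+x. enn_powr (G n x) r0 \<partial>count_space UNIV) \<le> ennreal ((C * R0) powr r0)" if "n \<in> {1..L}" for n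
    using int_real[OF that _ Sr(1)] r0 Sr(2) by (simp add: R0_def)
  have B2: "(\<integral>\<^sup>+x. enn_powr (G n x) p \<partial>count_space UNIV) \<le> ennreal (B2 n powr p)" if n: "n \<in> {1..L}" for n
  proof -
    have "(\<integral>\<^sup>+x. enn_powr (G n x) p \<partial>count_space UNIV) = (\<integral>\<^sup>+x. enn_powr (G n x) (p - r0) * enn_powr (G n x) r0 \<partial>count_space UNIV)"
      using enn_powr_add_exp[of "p - r0" r0] r0 by simp
    also have "\<dots> \<le> (\<integral>\<^sup>+x. ennreal (A2 n powr (p - r0)) * enn_powr (G n x) r0 \<partial>count_space UNIV)"
    proof (intro nn_integral_mono mult_right_mono)
      fix x
      show "enn_powr (G n x) (p - r0) \<le> ennreal (A2 n powr (p - r0))"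
        using enn_powr_mono[OF GA2[OF n, of x], of "p - r0"] r0 A1pos[OF n] by (simp add: enn_powr_ennreal)
    qed simp
    also have "\<dots> = ennreal (A2 n powr (p - r0)) * (\<integral>\<^sup>+x. enn_powr (G n x) r0 \<partial>count_space UNIV)"
      by (simp add: nn_integral_cmult)
    also have "\<dots> \<le> ennreal (A2 n powr (p - r0)) * ennreal ((C * R0) powr r0)"
      by (intro mult_left_mono Br[OF n]) simp
    also have "\<dots> = ennreal (B2 n powr p)"
      using p by (simp add: B2_def powr_powr ennreal_mult[symmetric])
    finally show ?thesis .
  qed
  have L1: "LHS \<le> ennreal ((C * P0) ^ (h - 2) * (\<Sum>n\<in>{1..L}. c n))"
  proof (rule key)
    show "c n > 0" if "n \<in> {1..L}" for n using A1pos[OF that] C P0 by (simp add: c_def)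
    show "C * P0 \<ge> 0" using C P0 by simp
    show "(\<integral>\<^sup>+x. enn_powr (G n x) p \<partial>count_space UNIV) \<le> ennreal ((C * P0) powr p)" if "n \<in> {1..L}" for n
      using Bp[OF that] .
    show "(\<integral>\<^sup>+x. enn_powr (G n x * G n x) p \<partial>count_space UNIV) \<le> ennreal (c n powr p)" if n: "n \<in> {1..L}" for n
    proof -
      have b1: "(\<integral>\<^sup>+x. enn_powr (G n x * G n x) p \<partial>count_space UNIV) \<le> ennreal ((A1 n * (C * P0)) powr p)"
        by (rule gg_bound) (use p C P0 A1pos[OF n] GA1[OF n] Bp[OF n] in auto)
      have b2: "(\<integral>\<^sup>+x. enn_powr (G n x * G n x) p \<partial>count_space UNIV) \<le> ennreal ((A2 n * B2 n) powr p)"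
        by (rule gg_bound) (use p A1pos[OF n] GA2[OF n] B2[OF n] in auto)
      show ?thesis
      proof (cases "A1 n * (C * P0) \<le> A2 n * B2 n")
        case True then show ?thesis using b1 by (simp add: c_def)
      next
        case False then show ?thesis using b2 by (simp add: c_def)
      qed
    qed
  qed
  have "(\<Sum>n\<in>{1..L}. c n) \<le> 4 / (1 - 1 / p) * real L powr (1 - 1 / r0) * (C * R0) * (C * P0)"
  proof (rule pprime_sum)
    show "0 < 1 / p" "1 / p < 1 / r0" "1 / r0 \<le> 1" using p r0 by (auto simp: field_simps)
    show "C * P0 > 0" "C * R0 > 0" using C P0 R0 by auto
    show "c n \<le> real n powr (-(1 / p)) * (C * P0)\<^sup>2" if n: "n \<in> {1..L}" for n
    proof -
      have "c n \<le> A1 n * (C * P0)" by (simp add: c_def)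
      also have "\<dots> = real n powr (-(1 / p)) * (C * P0)\<^sup>2" by (simp add: A1_def power2_eq_square mult_ac)
      finally show ?thesis .
    qed
    show "c n \<le> real n powr (-(2 * (1 / r0) - 1 / p)) * (C * R0)\<^sup>2" if n: "n \<in> {1..L}" for n
    proof -
      have "c n \<le> A2 n * B2 n" by (simp add: c_def)
      also have "\<dots> = real n powr (-(2 * (1 / r0) - 1 / p)) * (C * R0)\<^sup>2"
        unfolding A2_def B2_def by (rule powr_alg2) (use C R0 n r0 in auto)
      finally show ?thesis .
    qed
  qed
  then have "(C * P0) ^ (h - 2) * (\<Sum>n\<in>{1..L}. c n) \<le> (C * P0) ^ (h - 2) * (4 / (1 - 1 / p) * real L powr (1 - 1 / r0) * (C * R0) * (C * P0))"
    using C P0 by (intro mult_left_mono) auto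
  also have "(C * P0) ^ (h - 2) * (4 / (1 - 1 / p) * real L powr (1 - 1 / r0) * (C * R0) * (C * P0))
      = C ^ h * (4 / (1 - 1 / p) * real L powr (1 - 1 / r0)) * R0 * P0 ^ (h - 1)"
  proof -
    obtain k where k: "h = k + 2" using h by (metis add.commute le_Suc_ex)
    show ?thesis by (simp add: k power_mult_distrib algebra_simps)
  qed
  finally have R: "(C * P0) ^ (h - 2) * (\<Sum>n\<in>{1..L}. c n) \<le> C ^ h * (4 / (1 - 1 / p) * real L powr (1 - 1 / r0)) * R0 * P0 ^ (h - 1)" .
  show ?thesis using order_trans[OF L1 ennreal_leI[OF R]] by (simp add: P0_def R0_def)
qed

end


lemma ennreal_prod5:
  assumes "a \<ge> 0" "b \<ge> 0" "c \<ge> 0" "d \<ge> 0" "e \<ge> 0"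
  shows "ennreal a * ennreal b * ennreal c * ennreal d * ennreal e ^ k = ennreal (a * b * c * d * e ^ k)"
  using assms by (simp add: ennreal_mult ennreal_power)

context setting
begin

lemma F_nonzero_pos:
  assumes "F z0 \<noteq> 0"
  shows "(\<integral>\<^sup>+z. enn_powr (F z) s \<partial>count_space UNIV) \<noteq> 0"
  using assms by (simp only: cs_int_0_iff) (metis UNIV_I enn_powr_eq_0_iff)

lemma final1:
  "LHS \<le> ennreal (4 * C ^ h * real L) * (SUP z. F z)
      * enn_powr (\<integral>\<^sup>+z. enn_powr (F z) p \<partial>count_space UNIV) (1 / p) ^ (h - 1)"
  (is "_ \<le> ?X * ?M * ?Pp ^ (h - 1)")
proof (cases "\<forall>z. F z = 0")
  case True
  then have "LHS = 0" by (intro zero_case) blast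
  then show ?thesis by simp
next
  case False
  then obtain z0 where z0: "F z0 \<noteq> 0" by blast
  define Sp where "Sp = (\<integral>\<^sup>+z. enn_powr (F z) p \<partial>count_space UNIV)"
  have Sp0: "Sp \<noteq> 0" using F_nonzero_pos[OF z0] by (simp add: Sp_def)
  have M0: "?M \<noteq> 0"
  proof -
    have "F z0 \<le> ?M" by (rule SUP_upper) simp
    then show ?thesis using z0 by (auto simp: bot_unique[symmetric] le_zero_eq)
  qed
  have X0: "?X \<noteq> 0" using C L by (simp add: ennreal_eq_0_iff not_le)
  have hpos: "h - 1 > 0" using h by simp
  show ?thesis
  proof (cases "?M = \<top> \<or> Sp = \<top>")
    case True
    have Pp0: "?Pp ^ (h - 1) \<noteq> 0" using Sp0 by (simp add: Sp_def)
    have "?X * ?M * ?Pp ^ (h - 1) = \<top>"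
      using True
    proof
      assume Mt: "?M = \<top>"
      have XM: "?X * ?M = \<top>" using X0 unfolding Mt by (rule ennreal_top_mult_left)
      show ?thesis by (simp only: XM) (rule ennreal_top_mult_right[OF Pp0])
    next
      assume "Sp = \<top>"
      then have "?Pp ^ (h - 1) = \<top>" using hpos by (simp add: Sp_def)
      then show ?thesis using X0 M0 by (simp add: ennreal_mult_top ennreal_top_mult)
    qed
    then show ?thesis by simp
  next
    case False
    then obtain M0' Sp0' where M': "?M = ennreal M0'" "M0' \<ge> 0" and S': "Sp = ennreal Sp0'" "Sp0' \<ge> 0"
      by (metis ennreal_cases)
    have M0'pos: "M0' > 0" using M' M0 by (auto simp: less_le)
    have Sp0'pos: "Sp0' > 0" using S' Sp0 by (auto simp: less_le)
    have "LHS \<le> ennreal (C ^ h * real L * M0' * (Sp0' powr (1 / p)) ^ (h - 1))"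
      by (rule claim_inf[OF S'(1)[unfolded Sp_def] Sp0'pos M'(1) M0'pos])
    also have "\<dots> \<le> ennreal (4 * C ^ h * real L * M0' * (Sp0' powr (1 / p)) ^ (h - 1))"
      using C M'(2) by (intro ennreal_leI) (simp add: mult_ac)
    also have "\<dots> = ?X * ?M * ?Pp ^ (h - 1)"
      using C M' S' unfolding Sp_def[symmetric]
      by (simp add: enn_powr_ennreal ennreal_mult[symmetric] ennreal_power)
    finally show ?thesis .
  qed
qed

lemma final2:
  assumes r: "r \<ge> (1::ennreal)"
  shows "LHS \<le> ennreal (4 * C ^ h) * min (conj_exp r) (ennreal (p / (p - 1))) * Lpow r L
      * lpnorm r UNIV F * enn_powr (\<integral>\<^sup>+z. enn_powr (F z) p \<partial>count_space UNIV) (1 / p) ^ (h - 1)"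
  (is "_ \<le> ?K * ?R * ?Pp ^ (h - 1)")
proof (cases "r = \<top>")
  case True
  have pp: "ennreal (p / (p - 1)) \<ge> 1" using p by (simp add: field_simps)
  have "?K = ennreal (4 * C ^ h * real L)"
    using True pp C by (simp add: conj_exp_def Lpow_def min_absorb1 ennreal_mult[symmetric])
  moreover have "?R = (SUP z. F z)" using True by (simp add: lpnorm_def)
  ultimately show ?thesis using final1 by simp
next
  case False
  then obtain r0 where r0: "r = ennreal r0" "r0 \<ge> 0" by (metis ennreal_cases)
  have r1: "r0 \<ge> 1" using r r0 by (metis ennreal_1 ennreal_le_iff)
  have Req: "?R = enn_powr (\<integral>\<^sup>+z. enn_powr (F z) r0 \<partial>count_space UNIV) (1 / r0)"
    using False r0 by (simp add: lpnorm_def)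
  have Lp: "Lpow r L = ennreal (real L powr (1 - 1 / r0))" using False r0 by (simp add: Lpow_def)
  show ?thesis
  proof (cases "\<forall>z. F z = 0")
    case True
    then have "LHS = 0" by (intro zero_case) blast
    then show ?thesis by simp
  next
    case False
    then obtain z0 where z0: "F z0 \<noteq> 0" by blast
    define Sp where "Sp = (\<integral>\<^sup>+z. enn_powr (F z) p \<partial>count_space UNIV)"
    define Sr where "Sr = (\<integral>\<^sup>+z. enn_powr (F z) r0 \<partial>count_space UNIV)"
    have Sp0: "Sp \<noteq> 0" using F_nonzero_pos[OF z0] by (simp add: Sp_def)
    have Sr0: "Sr \<noteq> 0" using F_nonzero_pos[OF z0] by (simp add: Sr_def)
    have pp0: "p / (p - 1) > 0" using p by simp
    have ce0: "conj_exp r \<noteq> 0"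
    proof (cases "r0 = 1")
      case False
      then have "r0 / (r0 - 1) > 0" using r1 by simp
      then show ?thesis using r0 False by (auto simp: conj_exp_def ennreal_eq_0_iff)
    qed (use r0 in \<open>simp add: conj_exp_def\<close>)
    have K0: "?K \<noteq> 0"
    proof -
      have "C ^ h > 0" using C by simp
      then show ?thesis using L ce0 pp0 Lp by (auto simp: ennreal_eq_0_iff min_def)
    qed
    have hpos: "h - 1 > 0" using h by simp
    show ?thesis
    proof (cases "Sr = \<top> \<or> Sp = \<top>")
      case True
      have Pp0: "?Pp ^ (h - 1) \<noteq> 0" using Sp0 by (simp add: Sp_def)
      have R0: "?R \<noteq> 0" using Req Sr0 by (simp add: Sr_def)
      have "?K * ?R * ?Pp ^ (h - 1) = \<top>"
        using True
      proof
        assume "Sr = \<top>"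
        then have "?R = \<top>" using Req by (simp add: Sr_def)
        then have KR: "?K * ?R = \<top>" using K0 by simp
        show ?thesis by (simp only: KR) (rule ennreal_top_mult_right[OF Pp0])
      next
        assume "Sp = \<top>"
        then have "?Pp ^ (h - 1) = \<top>" using hpos by (simp add: Sp_def)
        moreover have "?K * ?R \<noteq> 0" using K0 R0 by simp
        ultimately show ?thesis by simp
      qed
      then show ?thesis by simp
    next
      case False
      then obtain Sp0' Sr0' where S': "Sp = ennreal Sp0'" "Sp0' \<ge> 0" and R': "Sr = ennreal Sr0'" "Sr0' \<ge> 0"
        by (metis ennreal_cases)
      have Sp0'pos: "Sp0' > 0" using S' Sp0 by (auto simp: less_le)
      have Sr0'pos: "Sr0' > 0" using R' Sr0 by (auto simp: less_le)
      define P0 where "P0 = Sp0' powr (1 / p)"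
      define R0 where "R0 = Sr0' powr (1 / r0)"
      have P0: "P0 \<ge> 0" "R0 \<ge> 0" by (simp_all add: P0_def R0_def)
      have Ppe: "?Pp = ennreal P0" using S' by (simp add: Sp_def[symmetric] P0_def enn_powr_ennreal)
      have Re: "?R = ennreal R0" using R' Req by (simp add: Sr_def[symmetric] R0_def enn_powr_ennreal)
      show ?thesis
      proof (cases "r0 \<ge> p")
        case True
        have rr: "r0 > 1" using True p by simp
        have ce: "conj_exp r = ennreal (r0 / (r0 - 1))"
          using rr r0 \<open>r \<noteq> \<top>\<close> by (simp add: conj_exp_def)
        have "r0 / (r0 - 1) \<le> p / (p - 1)" using rr True p by (simp add: field_simps)
        then have mn: "min (conj_exp r) (ennreal (p / (p - 1))) = ennreal (r0 / (r0 - 1))"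
          unfolding ce by (intro min_absorb1 ennreal_leI)
        have "LHS \<le> ennreal (C ^ h * (real L powr (1 - 1 / r0) / (1 - 1 / r0)) * R0 * P0 ^ (h - 1))"
          using claim_rge[OF S'(1)[unfolded Sp_def] Sp0'pos R'(1)[unfolded Sr_def] Sr0'pos True]
          by (simp add: P0_def R0_def)
        also have "\<dots> \<le> ennreal (4 * C ^ h * (r0 / (r0 - 1)) * real L powr (1 - 1 / r0) * R0 * P0 ^ (h - 1))"
        proof (intro ennreal_leI)
          have e: "real L powr (1 - 1 / r0) / (1 - 1 / r0) = r0 / (r0 - 1) * real L powr (1 - 1 / r0)"
            using rr by (simp add: field_simps)
          have Y: "C ^ h * (r0 / (r0 - 1) * real L powr (1 - 1 / r0)) * R0 * P0 ^ (h - 1) \<ge> 0"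
            using C rr P0 by simp
          show "C ^ h * (real L powr (1 - 1 / r0) / (1 - 1 / r0)) * R0 * P0 ^ (h - 1)
              \<le> 4 * C ^ h * (r0 / (r0 - 1)) * real L powr (1 - 1 / r0) * R0 * P0 ^ (h - 1)"
          proof -
            have eqT: "4 * C ^ h * (r0 / (r0 - 1)) * real L powr (1 - 1 / r0) * R0 * P0 ^ (h - 1)
                = 4 * (C ^ h * (r0 / (r0 - 1) * real L powr (1 - 1 / r0)) * R0 * P0 ^ (h - 1))"
              by (simp only: mult_ac)
            have aux: "\<And>y::real. 0 \<le> y \<Longrightarrow> y \<le> 4 * y" by linarith
            show ?thesis unfolding e eqT by (rule aux[OF Y])
          qed
        qed
        also have "\<dots> = ?K * ?R * ?Pp ^ (h - 1)"
          unfolding mn Lp Re Ppe using C rr P0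
          by (simp add: ennreal_mult[symmetric] ennreal_power mult_ac)
        finally show ?thesis .
      next
        case False
        have ce: "conj_exp r \<ge> ennreal (p / (p - 1))"
        proof (cases "r0 = 1")
          case True then show ?thesis using r0 by (simp add: conj_exp_def)
        next
          case ne: False
          then have rr: "r0 > 1" using r1 by simp
          have "p / (p - 1) \<le> r0 / (r0 - 1)" using rr False p by (simp add: field_simps)
          then show ?thesis using rr r0 \<open>r \<noteq> \<top>\<close> ne by (simp add: conj_exp_def ennreal_leI)
        qed
        have mn: "min (conj_exp r) (ennreal (p / (p - 1))) = ennreal (p / (p - 1))"
          using ce by (rule min_absorb2)
        have "LHS \<le> ennreal (C ^ h * (4 / (1 - 1 / p) * real L powr (1 - 1 / r0)) * R0 * P0 ^ (h - 1))"
          using claim_rlt[OF S'(1)[unfolded Sp_def] Sp0'pos R'(1)[unfolded Sr_def] Sr0'pos r1] False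
          by (simp add: P0_def R0_def)
        also have "4 / (1 - 1 / p) = 4 * (p / (p - 1))" using p by (simp add: field_simps)
        also have "ennreal (C ^ h * (4 * (p / (p - 1)) * real L powr (1 - 1 / r0)) * R0 * P0 ^ (h - 1)) = ?K * ?R * ?Pp ^ (h - 1)"
          unfolding mn Lp Re Ppe using C p P0
          by (simp add: ennreal_mult[symmetric] ennreal_power mult_ac)
        finally show ?thesis .
      qed
    qed
  qed
qed

end


theorem proposition4p19:
  fixes q1 :: "(int \<times> int) pmf" and c cc t p :: real and h L :: nat
    and f :: "int \<times> int \<Rightarrow> real"
  assumes sym: "\<And>x. pmf q1 x = pmf q1 (- x)"
    and c_pos: "c > 0"
    and subG1: "\<And>s::real. (\<integral>\<^sup>+ x. ennreal (exp (s * real_of_int (fst x))) \<partial>measure_pmf q1)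
                    \<le> ennreal (exp (c * s\<^sup>2 / 2))"
    and subG2: "\<And>s::real. (\<integral>\<^sup>+ x. ennreal (exp (s * real_of_int (snd x))) \<partial>measure_pmf q1)
                    \<le> ennreal (exp (c * s\<^sup>2 / 2))"
    and cc_ge: "cc \<ge> 1"
    and cc1: "\<And>s n. s \<ge> 0 \<Longrightarrow> n \<ge> 1 \<Longrightarrow>
       (\<integral>\<^sup>+ x. ennreal (exp (s * real_of_int (fst x))) \<partial>measure_pmf (walk q1 n))
         \<le> ennreal (exp (cc * s\<^sup>2 * real n / 2)) \<and>
       (\<integral>\<^sup>+ x. ennreal (exp (s * real_of_int (snd x))) \<partial>measure_pmf (walk q1 n))
         \<le> ennreal (exp (cc * s\<^sup>2 * real n / 2))"
    and cc2: "\<And>s n. s \<ge> 0 \<Longrightarrow> n \<ge> 1 \<Longrightarrow>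
       (\<integral>\<^sup>+ x. ennreal (exp (s * real_of_int (fst x)) * pmf (walk q1 n) x ^ 2
                          / pmf (walk q1 (2 * n)) (0, 0)) \<partial>count_space UNIV)
         \<le> ennreal (exp (cc * s\<^sup>2 * real n / 2)) \<and>
       (\<integral>\<^sup>+ x. ennreal (exp (s * real_of_int (snd x)) * pmf (walk q1 n) x ^ 2
                          / pmf (walk q1 (2 * n)) (0, 0)) \<partial>count_space UNIV)
         \<le> ennreal (exp (cc * s\<^sup>2 * real n / 2))"
    and cc3: "\<And>s n. s \<ge> 0 \<Longrightarrow> n \<ge> 1 \<Longrightarrow>
       (\<integral>\<^sup>+ x. ennreal (exp (s * zn x)) \<partial>measure_pmf (walk q1 n))
         \<le> ennreal (cc * exp (2 * cc * s\<^sup>2 * real n))"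
    and cc4: "\<And>s n x. s \<ge> 0 \<Longrightarrow> n \<ge> 1 \<Longrightarrow>
       exp (s * zn x) * pmf (walk q1 n) x \<le> cc * exp (2 * cc * s\<^sup>2 * real n) / real n"
    and h: "h \<ge> 2" and t: "t \<ge> 0" and p: "1 < p"
  shows
   "(\<forall>I. partition_on {..<h} I \<and> I \<noteq> star h \<longrightarrow>
       lpnorm (ennreal p) {xs. length xs = h} (\<lambda>xs. qhat q1 f I L xs / ennreal (Wt t xs))
       \<le> ennreal (4 * (cc * exp (2 * cc * t\<^sup>2 * real L)) ^ h * real L)
           * lpnorm \<top> UNIV (\<lambda>x. ennreal (\<bar>f x\<bar> / wt t x))
           * lpnorm (ennreal p) UNIV (\<lambda>x. ennreal (\<bar>f x\<bar> / wt t x)) ^ (h - 1))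
    \<and>
    (\<forall>r::ennreal. r \<ge> 1 \<longrightarrow> (\<forall>I. partition_on {..<h} I \<and> I \<noteq> star h \<longrightarrow>
       lpnorm (ennreal p) {xs. length xs = h} (\<lambda>xs. qhat q1 f I L xs / ennreal (Wt t xs))
       \<le> ennreal (4 * (cc * exp (2 * cc * t\<^sup>2 * real L)) ^ h)
           * min (conj_exp r) (ennreal (p / (p - 1))) * Lpow r L
           * lpnorm r UNIV (\<lambda>x. ennreal (\<bar>f x\<bar> / wt t x))
           * lpnorm (ennreal p) UNIV (\<lambda>x. ennreal (\<bar>f x\<bar> / wt t x)) ^ (h - 1)))"
proof -
  define C where "C = cc * exp (2 * cc * t\<^sup>2 * real L)"
  define F where "F z = ennreal (\<bar>f z\<bar> / wt t z)" for z
  define k where "k n y = ennreal (pmf (walk q1 n) y * exp (t * zn y))" for n y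
  define G where "G n x = (\<integral>\<^sup>+z. k n (x - z) * F z \<partial>count_space UNIV)" for n x
  have p0: "p > 0" using p by simp
  have Cpos: "C > 0" using cc_ge by (simp add: C_def)
  have Cexp: "cc * exp (2 * cc * t\<^sup>2 * real n) \<le> C" if "n \<in> {1..L}" for n
  proof -
    have "2 * cc * t\<^sup>2 * real n \<le> 2 * cc * t\<^sup>2 * real L"
      using that cc_ge by (intro mult_left_mono) auto
    then show ?thesis unfolding C_def using cc_ge by (intro mult_left_mono) auto
  qed
  have kint: "(\<integral>\<^sup>+y. k n y \<partial>count_space UNIV) \<le> ennreal C" if n: "n \<in> {1..L}" for n
  proof -
    have "(\<integral>\<^sup>+y. k n y \<partial>count_space UNIV) = (\<integral>\<^sup>+y. ennreal (exp (t * zn y)) \<partial>measure_pmf (walk q1 n))"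
      by (simp add: k_def nn_integral_measure_pmf ennreal_mult)
    also have "\<dots> \<le> ennreal (cc * exp (2 * cc * t\<^sup>2 * real n))"
      using cc3[OF t, of n] n by simp
    also have "\<dots> \<le> ennreal C" using Cexp[OF n] by (rule ennreal_leI)
    finally show ?thesis .
  qed
  have ksup: "k n y \<le> ennreal (C / real n)" if n: "n \<in> {1..L}" for n y
  proof -
    have "exp (t * zn y) * pmf (walk q1 n) y \<le> cc * exp (2 * cc * t\<^sup>2 * real n) / real n"
      using cc4[OF t, of n y] n by simp
    also have "\<dots> \<le> C / real n" using Cexp[OF n] n by (intro divide_right_mono) auto
    finally show ?thesis unfolding k_def by (intro ennreal_leI) (simp add: mult.commute)
  qed
  have H2: "enn_powr (G n x) s
        \<le> enn_powr (ennreal C) (s - 1) * (ennreal (C / real n) * (\<integral>\<^sup>+z. enn_powr (F z) s \<partial>count_space UNIV))"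
    if "n \<in> {1..L}" "s \<ge> 1" for n s x
    unfolding G_def by (rule conv_pt[OF that(2) kint[OF that(1)] ksup[OF that(1)]])
  have H3: "(\<integral>\<^sup>+x. enn_powr (G n x) s \<partial>count_space UNIV)
        \<le> enn_powr (ennreal C) (s - 1) * (ennreal C * (\<integral>\<^sup>+z. enn_powr (F z) s \<partial>count_space UNIV))"
    if "n \<in> {1..L}" "s \<ge> 1" for n s
    unfolding G_def by (rule conv_int[OF that(2) kint[OF that(1)]])
  have H4: "G n x \<le> ennreal C * (SUP z. F z)" if "n \<in> {1..L}" for n x
    unfolding G_def by (rule conv_sup[OF kint[OF that]]) (rule SUP_upper, simp)
  have Ffun: "(\<lambda>x. ennreal (\<bar>f x\<bar> / wt t x)) = F" by (simp add: F_def fun_eq_iff)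
  have Cdef: "cc * exp (2 * cc * t\<^sup>2 * real L) = C" by (simp add: C_def)
  have main: "lpnorm (ennreal p) {xs. length xs = h} (\<lambda>xs. qhat q1 f I L xs / ennreal (Wt t xs))
       \<le> ennreal (4 * C ^ h * real L) * lpnorm \<top> UNIV F * lpnorm (ennreal p) UNIV F ^ (h - 1)
     \<and> (\<forall>r::ennreal. r \<ge> 1 \<longrightarrow> lpnorm (ennreal p) {xs. length xs = h} (\<lambda>xs. qhat q1 f I L xs / ennreal (Wt t xs))
       \<le> ennreal (4 * C ^ h) * min (conj_exp r) (ennreal (p / (p - 1))) * Lpow r L
           * lpnorm r UNIV F * lpnorm (ennreal p) UNIV F ^ (h - 1))"
    if I: "partition_on {..<h} I" "I \<noteq> star h" for I
  proof (cases "L = 0")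
    case True
    have "lpnorm (ennreal p) {xs. length xs = h} (\<lambda>xs. qhat q1 f I L xs / ennreal (Wt t xs)) = 0"
      using True p0 by (simp add: lpnorm_def qhat_def)
    then show ?thesis by simp
  next
    case False
    then have L1: "L \<ge> 1" by simp
    obtain B a b where Bab: "B \<in> I" "a \<in> B" "b \<in> B" "a \<noteq> b" using exists_pair[OF I] by blast
    have Bsub: "B \<subseteq> {..<h}" using I(1) Bab(1) by (auto simp: partition_on_def)
    have ab: "a < h" "b < h" using Bsub Bab by auto
    define \<Phi> where "\<Phi> xs = qhat q1 f I L xs / ennreal (Wt t xs)" for xs
    have H1: "\<Phi> xs \<le> (\<Sum>n\<in>{1..L}. of_bool (xs ! a = xs ! b) * (\<Prod>i<h. G n (xs ! i)))"
      if len: "length xs = h" for xs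
    proof -
      have Wpos: "Wt t xs > 0" by (simp add: Wt_def wt_pos prod_pos)
      have Winv: "ennreal (1 / Wt t xs) = (\<Prod>i<h. ennreal (1 / wt t (xs ! i)))"
      proof -
        have "1 / Wt t xs = (\<Prod>i<h. 1 / wt t (xs ! i))"
          using len by (simp add: Wt_def prod_dividef)
        then show ?thesis by (simp add: prod_ennreal wt_pos less_imp_le)
      qed
      have "\<Phi> xs = (\<Sum>n\<in>{1..L}. (if sim xs I then (\<Prod>i<length xs. qabs q1 n f (xs ! i)) else 0) * ennreal (1 / Wt t xs))"
        unfolding \<Phi>_def qhat_def using Wpos by (simp add: enn_div_pos sum_distrib_right)
      also have "\<dots> \<le> (\<Sum>n\<in>{1..L}. of_bool (xs ! a = xs ! b) * (\<Prod>i<h. G n (xs ! i)))"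
      proof (intro sum_mono)
        fix n assume n: "n \<in> {1..L}"
        show "(if sim xs I then (\<Prod>i<length xs. qabs q1 n f (xs ! i)) else 0) * ennreal (1 / Wt t xs)
            \<le> of_bool (xs ! a = xs ! b) * (\<Prod>i<h. G n (xs ! i))"
        proof (cases "sim xs I")
          case True
          have eq: "xs ! a = xs ! b" by (rule sim_pair[OF True Bab(1-3)])
          have "(\<Prod>i<h. qabs q1 n f (xs ! i)) * ennreal (1 / Wt t xs)
              = (\<Prod>i<h. qabs q1 n f (xs ! i) * ennreal (1 / wt t (xs ! i)))"
            unfolding Winv by (simp add: prod.distrib)
          also have "\<dots> \<le> (\<Prod>i<h. G n (xs ! i))"
          proof (rule prod_mono_enn)
            fix i
            have "qabs q1 n f (xs ! i) * ennreal (1 / wt t (xs ! i)) = qabs q1 n f (xs ! i) / ennreal (wt t (xs ! i))"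
              by (simp add: enn_div_pos wt_pos)
            also have "\<dots> \<le> G n (xs ! i)"
              unfolding G_def k_def F_def by (rule qabs_bound[OF t])
            finally show "qabs q1 n f (xs ! i) * ennreal (1 / wt t (xs ! i)) \<le> G n (xs ! i)" .
          qed
          finally show ?thesis using True eq len by simp
        qed simp
      qed
      finally show ?thesis .
    qed
    interpret S: setting h p L C F G \<Phi> a b
      by unfold_locales (use h p L1 Cpos ab Bab(4) H1 H2 H3 H4 in auto)
    have eqL: "lpnorm (ennreal p) {xs. length xs = h} (\<lambda>xs. qhat q1 f I L xs / ennreal (Wt t xs)) = S.LHS"
      using p0 by (simp add: lpnorm_def S.LHS_def \<Phi>_def)
    have eqP: "lpnorm (ennreal p) UNIV F = enn_powr (\<integral>\<^sup>+z. enn_powr (F z) p \<partial>count_space UNIV) (1 / p)"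
      using p0 by (simp add: lpnorm_def)
    have eqM: "lpnorm \<top> UNIV F = (SUP z. F z)" by (simp add: lpnorm_def)
    show ?thesis unfolding eqL eqP eqM using S.final1 S.final2 by blast
  qed
  show ?thesis unfolding Ffun Cdef using main by blast
qed


end
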